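(* Let $f$ be a translation invariant quadratic form in $s$ variables with integer coefficients and $\mathrm{rank}_{\mathrm{off}}(f)\ge5$. Then for every prime $p$, $$\sigma_p^\ast\ge\frac{p^2}{\phi(p)^s}\sigma_p.$$
   Context: $f(\mathbf{x})=\mathbf{x}M\mathbf{x}^T$ with $M$ symmetric integer; translation invariant means $(1,\ldots,1)M=\mathbf{0}$; $\mathrm{rank}_{\mathrm{off}}(f)$ is the maximal rank of a submatrix $(a_{i_k,j_l})_{1\le k,l\le r}$ of $M$ with $\{i_1,\ldots,i_r\}\cap\{j_1,\ldots,j_r\}=\emptyset$. $e(z)=e^{2\pi iz}$, $\phi$ Euler's totient. $S(q,a)=\sum_{1\le c_1,\ldots,c_s\le q}e(af(\mathbf{c})/q)$, $S^\ast(q,a)$ is the same sum restricted to $\gcd(c_j,q)=1$ for all $j$, $B(q)=q^{-s}\sum_{a\le q,\gcd(a,q)=1}S(q,a)$, $B^\ast(q)=\phi(q)^{-s}\sum_{a\le q,\gcd(a,q)=1}S^\ast(q,a)$, $\sigma_p=\sum_{k\ge0}B(p^k)$, $\sigma_p^\ast=\sum_{k\ge0}B^\ast(p^k)$ (convergent series). Equivalently $\sigma_p^\ast=\lim_{k\to\infty}\frac{p^k}{\phi(p^k)^s}\#\{1\le\mathbf{x}\le p^k:\gcd(x_j,p)=1\ \forall j,\ f(\mathbf{x})\equiv0\ (\mathrm{mod}\ p^k)\}$ and $\sigma_p=\lim_{k\to\infty}p^{-k(s-1)}\#\{1\le\mathbf{x}\le p^k: f(\mathbf{x})\equiv0\ (\mathrm{mod}\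 p^k)\}$. *)

theory Defs
  imports "Jordan_Normal_Form.DL_Rank_Submatrix" "HOL-Number_Theory.Number_Theory"
begin

definition qform :: "nat \<Rightarrow> int mat \<Rightarrow> (nat \<Rightarrow> int) \<Rightarrow> int" where
  "qform s M x = (\<Sum>i<s. \<Sum>j<s. x i * M $$ (i, j) * x j)"

definition translation_invariant :: "nat \<Rightarrow> int mat \<Rightarrow> bool" where
  "translation_invariant s M \<longleftrightarrow> (\<forall>j<s. (\<Sum>i<s. M $$ (i, j)) = 0)"

definition rank_off :: "nat \<Rightarrow> int mat \<Rightarrow> nat" where
  "rank_off s M = Max {vec_space.rank (card I) (submatrix (map_mat rat_of_int M) I J) | I J.
      I \<subseteq> {..<s} \<and> J \<subseteq> {..<s} \<and> I \<inter> J = {} \<and> card I = card J}"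

definition count_sol :: "nat \<Rightarrow> int mat \<Rightarrow> nat \<Rightarrow> nat \<Rightarrow> nat" where
  "count_sol s M p k = card {x \<in> {..<s} \<rightarrow>\<^sub>E {1..int (p ^ k)}. [qform s M x = 0] (mod int (p ^ k))}"

definition count_sol_star :: "nat \<Rightarrow> int mat \<Rightarrow> nat \<Rightarrow> nat \<Rightarrow> nat" where
  "count_sol_star s M p k = card {x \<in> {..<s} \<rightarrow>\<^sub>E {1..int (p ^ k)}.
      (\<forall>j<s. coprime (x j) (int p)) \<and> [qform s M x = 0] (mod int (p ^ k))}"

definition sigma_p :: "nat \<Rightarrow> int mat \<Rightarrow> nat \<Rightarrow> real" where
  "sigma_p s M p = lim (\<lambda>k. real (count_sol s M p k) / real p ^ (k * (s - 1)))"

definition sigma_p_star :: "nat \<Rightarrow> int mat \<Rightarrow> nat \<Rightarrow> real" where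
  "sigma_p_star s M p = lim (\<lambda>k. real p ^ k / real (totient (p ^ k)) ^ s * real (count_sol_star s M p k))"

end

theory Submission
  imports Defs
begin

definition ee :: "nat \<Rightarrow> int \<Rightarrow> complex" where
  "ee Q t = cis (2 * pi * of_int t / of_nat Q)"

lemma ee_add: "ee Q (a + b) = ee Q a * ee Q b"
  unfolding ee_def by (simp add: cis_mult distrib_left add_divide_distrib)

lemma ee_multQ: assumes "Q > 0" shows "ee Q (int Q * m) = 1"
proof -
  have "2 * pi * of_int (int Q * m) / of_nat Q = 2 * pi * of_int m"
    using assms by (simp add: field_simps)
  then show ?thesis unfolding ee_def by (simp add: cis_multiple_2pi)
qed

lemma ee_cong: assumes "Q > 0" "[a = b] (mod int Q)" shows "ee Q a = ee Q b"
proof -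
  obtain k where "b = a + int Q * k" using assms(2) cong_iff_lin by blast
  then show ?thesis using ee_add ee_multQ[OF assms(1)] by simp
qed

lemma norm_ee[simp]: "norm (ee Q t) = 1"
  unfolding ee_def by simp

lemma cnj_ee: "cnj (ee Q t) = ee Q (-t)"
  unfolding ee_def by (simp add: cis_cnj)

lemma ee_scale: assumes "p > 0" shows "ee (p * Q) (int p * t) = ee Q t"
  unfolding ee_def using assms by (simp add: field_simps)

lemma ee_eq_1: assumes "Q > 0" "ee Q t = 1" shows "int Q dvd t"
proof -
  have "cos (2 * pi * of_int t / of_nat Q) = 1"
    using assms(2) unfolding ee_def by (metis cis.sel(1) one_complex.sel(1))
  then obtain n :: int where n: "2 * pi * of_int t / of_nat Q = of_int n * 2 * pi"
    using cos_one_2pi_int by blast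
  then have "of_int t = (of_int n * of_nat Q :: real)" using assms(1) pi_gt_zero
    by (simp add: field_simps)
  then have "t = n * int Q" by (metis of_int_eq_iff of_int_mult of_int_of_nat_eq)
  then show ?thesis by simp
qed

lemma sum_ee: assumes "Q > 0"
  shows "(\<Sum>b<Q. ee Q (int b * t)) = (if int Q dvd t then of_nat Q else 0)"
proof (cases "int Q dvd t")
  case True
  then have "\<And>b. ee Q (int b * t) = 1"
    by (metis assms dvd_mult ee_multQ dvd_def)
  then show ?thesis using True by simp
next
  case False
  let ?g = "\<lambda>b. ee Q (int b * t)"
  have "ee Q t * (\<Sum>b<Q. ?g b) = (\<Sum>b<Q. ?g (Suc b))"
    by (simp add: sum_distrib_left ee_add[symmetric] algebra_simps)
  also have "\<dots> = (\<Sum>b<Q. ?g b)"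
  proof -
    have "(\<Sum>b<Suc Q. ?g b) = ?g 0 + (\<Sum>b<Q. ?g (Suc b))" by (rule sum.lessThan_Suc_shift)
    moreover have "(\<Sum>b<Suc Q. ?g b) = (\<Sum>b<Q. ?g b) + ?g Q" by simp
    moreover have "?g 0 = 1" by (simp add: ee_def)
    moreover have "?g Q = 1" using ee_multQ[OF assms, of t] by simp
    ultimately show ?thesis by simp
  qed
  finally have "(ee Q t - 1) * (\<Sum>b<Q. ?g b) = 0" by (simp add: algebra_simps)
  moreover have "ee Q t \<noteq> 1" using ee_eq_1[OF assms] False by blast
  ultimately show ?thesis using False by simp
qed

lemma fourier_count: assumes "finite X" "Q > 0"
  shows "of_nat (card {x\<in>X. int Q dvd g x}) * of_nat Q = (\<Sum>b<Q. \<Sum>x\<in>X. ee Q (int b * g x))"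
proof -
  have "(\<Sum>b<Q. \<Sum>x\<in>X. ee Q (int b * g x)) = (\<Sum>x\<in>X. \<Sum>b<Q. ee Q (int b * g x))"
    by (rule sum.swap)
  also have "\<dots> = (\<Sum>x\<in>X. if int Q dvd g x then of_nat Q else 0)"
    using sum_ee[OF assms(2)] by simp
  also have "\<dots> = of_nat (card {x\<in>X. int Q dvd g x}) * of_nat Q"
    using assms(1) by (simp add: sum.If_cases Int_def)
  finally show ?thesis by simp
qed

definition box :: "nat \<Rightarrow> nat \<Rightarrow> (nat \<Rightarrow> int) set" where
  "box s Q = {..<s} \<rightarrow>\<^sub>E {0..<int Q}"

definition cset :: "nat \<Rightarrow> nat \<Rightarrow> int \<Rightarrow> (nat \<Rightarrow> int) \<Rightarrow> (nat \<Rightarrow> int) set" where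
  "cset s Q m r = {x \<in> box s Q. \<forall>j<s. [x j = r j] (mod m)}"

definition sh :: "nat \<Rightarrow> nat \<Rightarrow> (nat \<Rightarrow> int) \<Rightarrow> (nat \<Rightarrow> int) \<Rightarrow> (nat \<Rightarrow> int)" where
  "sh s Q h x = restrict (\<lambda>j. (x j + h j) mod int Q) {..<s}"

definition Mv :: "nat \<Rightarrow> int mat \<Rightarrow> (nat \<Rightarrow> int) \<Rightarrow> nat \<Rightarrow> int" where
  "Mv s M h i = (\<Sum>j<s. M $$ (i, j) * h j)"

lemma finite_box[simp]: "finite (box s Q)"
  unfolding box_def by (simp add: finite_PiE)

lemma card_box: "card (box s Q) = Q ^ s"
  unfolding box_def by (simp add: card_PiE)

lemma finite_cset[simp]: "finite (cset s Q m r)"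
  unfolding cset_def by (rule finite_subset[of _ "box s Q"]) auto

lemma card_cset_le: "card (cset s Q m r) \<le> Q ^ s"
proof -
  have "card (cset s Q m r) \<le> card (box s Q)" by (rule card_mono) (auto simp: cset_def)
  then show ?thesis by (simp add: card_box)
qed

lemma box_memD: "x \<in> box s Q \<Longrightarrow> j < s \<Longrightarrow> 0 \<le> x j \<and> x j < int Q"
  unfolding box_def using PiE_mem[of x "{..<s}" "\<lambda>_. {0..<int Q}" j] by simp

lemma box_restrict: "(\<And>j. j < s \<Longrightarrow> 0 \<le> f j \<and> f j < int Q) \<Longrightarrow> restrict f {..<s} \<in> box s Q"
  unfolding box_def by (simp add: restrict_PiE_iff)

lemma box_memD2: "x \<in> box s Q \<Longrightarrow> j \<ge> s \<Longrightarrow> x j = undefined"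
  unfolding box_def using PiE_arb[of x "{..<s}" "\<lambda>_. {0..<int Q}" j] by simp

lemma box_eqI: assumes "x \<in> box s Q" "y \<in> box s Q'" "\<And>j. j < s \<Longrightarrow> x j = y j" shows "x = y"
proof
  fix j show "x j = y j"
  proof (cases "j < s")
    case False
    then show ?thesis using box_memD2[OF assms(1)] box_memD2[OF assms(2)] by simp
  qed (use assms(3) in simp)
qed

lemma qform_cong: assumes "\<And>j. j < s \<Longrightarrow> [x j = y j] (mod m)"
  shows "[qform s M x = qform s M y] (mod m)"
  unfolding qform_def
  by (intro cong_sum cong_mult cong_refl) (use assms in auto)

lemma qform_add: assumes symm: "\<And>i j. i < s \<Longrightarrow> j < s \<Longrightarrow> M $$ (i, j) = M $$ (j, i)"
  shows "qform s M (\<lambda>j. y j + h j) = qform s M y + 2 * (\<Sum>i<s. y i * Mv s M h i) + qform s M h"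
proof -
  define A where "A = (\<Sum>i<s. \<Sum>j<s. y i * M $$ (i, j) * h j)"
  define B where "B = (\<Sum>i<s. \<Sum>j<s. h i * M $$ (i, j) * y j)"
  have 1: "qform s M (\<lambda>j. y j + h j) = (\<Sum>i<s. \<Sum>j<s. y i * M $$ (i, j) * y j + y i * M $$ (i, j) * h j
      + h i * M $$ (i, j) * y j + h i * M $$ (i, j) * h j)"
    unfolding qform_def by (intro sum.cong refl) (simp add: algebra_simps)
  have 2: "(\<Sum>i<s. \<Sum>j<s. y i * M $$ (i, j) * y j + y i * M $$ (i, j) * h j
      + h i * M $$ (i, j) * y j + h i * M $$ (i, j) * h j) = qform s M y + A + B + qform s M h"
    unfolding qform_def A_def B_def by (simp only: sum.distrib)
  have 3: "B = (\<Sum>j<s. \<Sum>i<s. h i * M $$ (i, j) * y j)"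
    unfolding B_def by (rule sum.swap)
  have 4: "(\<Sum>j<s. \<Sum>i<s. h i * M $$ (i, j) * y j) = A"
  proof -
    have e: "h i * M $$ (i, j) * y j = y j * M $$ (j, i) * h i" if "i < s" "j < s" for i j
      using symm[OF that] by (simp add: algebra_simps)
    show ?thesis unfolding A_def by (intro sum.cong refl) (simp add: e)
  qed
  have 5: "A = (\<Sum>i<s. y i * Mv s M h i)"
    unfolding Mv_def A_def by (simp add: sum_distrib_left mult.assoc)
  show ?thesis using 1 2 3 4 5 by simp
qed

lemma mod_cong_dvd: assumes "m dvd int Q" shows "[a mod int Q = a] (mod m)"
  unfolding cong_def using assms by (simp add: mod_mod_cancel)

lemma sh_in_cset: assumes "Q > 0" "m dvd int Q" "\<And>j. j < s \<Longrightarrow> m dvd \<delta> j" "x \<in> cset s Q m r"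
  shows "sh s Q \<delta> x \<in> cset s Q m r"
proof -
  have "sh s Q \<delta> x \<in> box s Q" unfolding sh_def using assms(1) by (intro box_restrict) simp
  moreover have "[sh s Q \<delta> x j = r j] (mod m)" if "j < s" for j
  proof -
    have "[sh s Q \<delta> x j = x j + \<delta> j] (mod m)"
      unfolding sh_def using that mod_cong_dvd[OF assms(2)] by simp
    also have "[x j + \<delta> j = x j + 0] (mod m)"
      using assms(3)[OF that] by (intro cong_add cong_refl) (simp add: cong_0_iff)
    also have "[x j + 0 = r j] (mod m)" using assms(4) that unfolding cset_def by auto
    finally show ?thesis .
  qed
  ultimately show ?thesis unfolding cset_def by auto
qed

lemma sh_inv: assumes "x \<in> box s Q" "Q > 0" shows "sh s Q (\<lambda>j. - \<delta> j) (sh s Q \<delta> x) = x"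
proof (rule box_eqI[OF _ assms(1)])
  show "sh s Q (\<lambda>j. - \<delta> j) (sh s Q \<delta> x) \<in> box s Q" 
    unfolding sh_def using assms(2) by (intro box_restrict) simp
  fix j assume j: "j < s"
  have "((x j + \<delta> j) mod int Q + - \<delta> j) mod int Q = x j mod int Q"
    by (metis add_diff_cancel_right' diff_conv_add_uminus mod_diff_left_eq)
  also have "\<dots> = x j" using box_memD[OF assms(1) j] by simp
  finally show "sh s Q (\<lambda>j. - \<delta> j) (sh s Q \<delta> x) j = x j" unfolding sh_def using j by simp
qed

lemma sh_bij: assumes "Q > 0" "m dvd int Q" "\<And>j. j < s \<Longrightarrow> m dvd \<delta> j"
  shows "bij_betw (sh s Q \<delta>) (cset s Q m r) (cset s Q m r)"
proof (rule bij_betw_byWitness[where f' = "sh s Q (\<lambda>j. - \<delta> j)"])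
  show "\<forall>a\<in>cset s Q m r. sh s Q (\<lambda>j. - \<delta> j) (sh s Q \<delta> a) = a"
    using sh_inv assms(1) unfolding cset_def by blast
  have "sh s Q \<delta> (sh s Q (\<lambda>j. - \<delta> j) a) = a" if "a \<in> box s Q" for a
    using sh_inv[OF that assms(1), of "\<lambda>j. - \<delta> j"] by simp
  then show "\<forall>a'\<in>cset s Q m r. sh s Q \<delta> (sh s Q (\<lambda>j. - \<delta> j) a') = a'"
    unfolding cset_def by blast
  show "sh s Q \<delta> ` cset s Q m r \<subseteq> cset s Q m r" using sh_in_cset[of Q m s \<delta>, OF assms] by blast
  have "\<And>j. j < s \<Longrightarrow> m dvd - \<delta> j" using assms(3) by simp
  then show "sh s Q (\<lambda>j. - \<delta> j) ` cset s Q m r \<subseteq> cset s Q m r" using sh_in_cset[of Q m s "\<lambda>j. - \<delta> j", OF assms(1,2)] by blast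
qed

lemma sh_apply: "j < s \<Longrightarrow> sh s Q h x j = (x j + h j) mod int Q"
  unfolding sh_def by simp

lemma char_zero:
  assumes Q: "Q > 0" and m: "m dvd int Q" and i: "i < s" and nd: "\<not> int Q dvd c * m * v i"
  shows "(\<Sum>y\<in>cset s Q m r. ee Q (c * (\<Sum>j<s. y j * v j))) = 0"
proof -
  define \<delta> where "\<delta> = (\<lambda>j. if j = i then m else 0)"
  let ?X = "cset s Q m r"
  let ?F = "\<lambda>y. ee Q (c * (\<Sum>j<s. y j * v j))"
  have bij: "bij_betw (sh s Q \<delta>) ?X ?X"
    by (rule sh_bij[OF Q m]) (simp add: \<delta>_def)
  have F: "?F (sh s Q \<delta> y) = ?F y * ee Q (c * m * v i)" if "y \<in> ?X" for y
  proof -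
    have "[(\<Sum>j<s. sh s Q \<delta> y j * v j) = (\<Sum>j<s. (y j + \<delta> j) * v j)] (mod int Q)"
      by (intro cong_sum cong_mult cong_refl) (simp add: sh_apply cong_def)
    moreover have "(\<Sum>j<s. (y j + \<delta> j) * v j) = (\<Sum>j<s. y j * v j) + m * v i"
    proof -
      have "(\<Sum>j<s. \<delta> j * v j) = (\<Sum>j<s. if j = i then m * v i else 0)"
        by (intro sum.cong) (auto simp: \<delta>_def)
      also have "\<dots> = m * v i" using i by simp
      finally show ?thesis by (simp add: distrib_right sum.distrib)
    qed
    ultimately have "[c * (\<Sum>j<s. sh s Q \<delta> y j * v j) = c * (\<Sum>j<s. y j * v j) + c * m * v i] (mod int Q)"
      by (metis (no_types, lifting) cong_scalar_left distrib_left mult.assoc)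
    then show ?thesis by (simp add: ee_cong[OF Q] ee_add)
  qed
  have "(\<Sum>y\<in>?X. ?F y) = (\<Sum>y\<in>?X. ?F (sh s Q \<delta> y))"
    using sum.reindex_bij_betw[OF bij, of ?F] by simp
  also have "\<dots> = (\<Sum>y\<in>?X. ?F y) * ee Q (c * m * v i)"
    by (simp add: F sum_distrib_right)
  finally have "(\<Sum>y\<in>?X. ?F y) * (ee Q (c * m * v i) - 1) = 0" by (simp add: algebra_simps)
  moreover have "ee Q (c * m * v i) \<noteq> 1" using ee_eq_1[OF Q] nd by blast
  ultimately show ?thesis by simp
qed

lemma diff_bij:
  assumes Q: "Q > 0" and m: "m dvd int Q" and y: "y \<in> cset s Q m r"
  shows "bij_betw (\<lambda>h. sh s Q h y) (cset s Q m (\<lambda>_. 0)) (cset s Q m r)"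
proof (rule bij_betw_byWitness[where f' = "\<lambda>x. restrict (\<lambda>j. (x j - y j) mod int Q) {..<s}"])
  have yb: "y \<in> box s Q" using y unfolding cset_def by simp
  show "\<forall>h\<in>cset s Q m (\<lambda>_. 0). restrict (\<lambda>j. (sh s Q h y j - y j) mod int Q) {..<s} = h"
  proof
    fix h assume h: "h \<in> cset s Q m (\<lambda>_. 0)"
    then have hb: "h \<in> box s Q" unfolding cset_def by simp
    show "restrict (\<lambda>j. (sh s Q h y j - y j) mod int Q) {..<s} = h"
    proof (rule box_eqI[OF _ hb])
      show "restrict (\<lambda>j. (sh s Q h y j - y j) mod int Q) {..<s} \<in> box s Q"
        using Q by (intro box_restrict) simp
      fix j assume j: "j < s"
      have "((y j + h j) mod int Q - y j) mod int Q = h j mod int Q"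
        by (metis add_diff_cancel_left' mod_diff_left_eq)
      also have "\<dots> = h j" using box_memD[OF hb j] by simp
      finally show "restrict (\<lambda>j. (sh s Q h y j - y j) mod int Q) {..<s} j = h j"
        using j by (simp add: sh_apply)
    qed
  qed
  show "\<forall>x\<in>cset s Q m r. sh s Q (restrict (\<lambda>j. (x j - y j) mod int Q) {..<s}) y = x"
  proof
    fix x assume x: "x \<in> cset s Q m r"
    then have xb: "x \<in> box s Q" unfolding cset_def by simp
    show "sh s Q (restrict (\<lambda>j. (x j - y j) mod int Q) {..<s}) y = x"
    proof (rule box_eqI[OF _ xb])
      show "sh s Q (restrict (\<lambda>j. (x j - y j) mod int Q) {..<s}) y \<in> box s Q"
        unfolding sh_def using Q by (intro box_restrict) simp
      fix j assume j: "j < s"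
      have "(y j + (x j - y j) mod int Q) mod int Q = x j mod int Q"
        by (metis add.commute diff_add_cancel mod_add_left_eq)
      also have "\<dots> = x j" using box_memD[OF xb j] by simp
      finally show "sh s Q (restrict (\<lambda>j. (x j - y j) mod int Q) {..<s}) y j = x j"
        using j by (simp add: sh_apply)
    qed
  qed
  show "(\<lambda>h. sh s Q h y) ` cset s Q m (\<lambda>_. 0) \<subseteq> cset s Q m r"
  proof
    fix z assume "z \<in> (\<lambda>h. sh s Q h y) ` cset s Q m (\<lambda>_. 0)"
    then obtain h where h: "h \<in> cset s Q m (\<lambda>_. 0)" and z: "z = sh s Q h y" by blast
    have "\<And>j. j < s \<Longrightarrow> m dvd h j" using h unfolding cset_def by (simp add: cong_0_iff)
    then show "z \<in> cset s Q m r" using sh_in_cset[of Q m s h, OF Q m _ y] z by blast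
  qed
  show "(\<lambda>x. restrict (\<lambda>j. (x j - y j) mod int Q) {..<s}) ` cset s Q m r \<subseteq> cset s Q m (\<lambda>_. 0)"
  proof
    fix z assume "z \<in> (\<lambda>x. restrict (\<lambda>j. (x j - y j) mod int Q) {..<s}) ` cset s Q m r"
    then obtain x where x: "x \<in> cset s Q m r" and z: "z = restrict (\<lambda>j. (x j - y j) mod int Q) {..<s}" by blast
    have "z \<in> box s Q" unfolding z using Q by (intro box_restrict) simp
    moreover have "[z j = 0] (mod m)" if j: "j < s" for j
    proof -
      have "[z j = x j - y j] (mod m)" unfolding z using j mod_cong_dvd[OF m] by simp
      also have "[x j - y j = r j - r j] (mod m)"
        using x y j unfolding cset_def by (intro cong_diff) auto
      finally show ?thesis by simp
    qed
    ultimately show "z \<in> cset s Q m (\<lambda>_. 0)" unfolding cset_def by simp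
  qed
qed

lemma weyl:
  assumes Q: "Q > 0" and m: "m dvd int Q" and b: "coprime b (int Q)"
    and symm: "\<And>i j. i < s \<Longrightarrow> j < s \<Longrightarrow> M $$ (i, j) = M $$ (j, i)"
  shows "(cmod (\<Sum>x\<in>cset s Q m r. ee Q (b * qform s M x)))^2
     \<le> real (card (cset s Q m r)) * real (card {h\<in>box s Q. \<forall>i<s. int Q dvd 2 * m * Mv s M h i})"
proof -
  let ?X = "cset s Q m r"
  let ?H = "cset s Q m (\<lambda>_. 0)"
  let ?F = "\<lambda>x. ee Q (b * qform s M x)"
  let ?S = "\<Sum>x\<in>?X. ?F x"
  let ?P = "\<lambda>h. \<forall>i<s. int Q dvd 2 * m * Mv s M h i"
  define G where "G = (\<lambda>h y. ee Q (b * qform s M h) * ee Q (2 * b * (\<Sum>i<s. y i * Mv s M h i)))"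
  have inner: "(\<Sum>x\<in>?X. ?F x * cnj (?F y)) = (\<Sum>h\<in>?H. G h y)" if y: "y \<in> ?X" for y
  proof -
    have "(\<Sum>x\<in>?X. ?F x * cnj (?F y)) = (\<Sum>h\<in>?H. ?F (sh s Q h y) * cnj (?F y))"
      using sum.reindex_bij_betw[OF diff_bij[OF Q m y], of "\<lambda>x. ?F x * cnj (?F y)"] by simp
    also have "\<dots> = (\<Sum>h\<in>?H. G h y)"
    proof (intro sum.cong refl)
      fix h assume h: "h \<in> ?H"
      have "[qform s M (sh s Q h y) = qform s M (\<lambda>j. y j + h j)] (mod int Q)"
        by (rule qform_cong) (simp add: sh_apply cong_def)
      then have c1: "[qform s M (sh s Q h y) = qform s M y + 2 * (\<Sum>i<s. y i * Mv s M h i) + qform s M h] (mod int Q)"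
        by (simp only: qform_add[OF symm])
      have c2: "[b * qform s M (sh s Q h y) + - (b * qform s M y)
          = b * (qform s M y + 2 * (\<Sum>i<s. y i * Mv s M h i) + qform s M h) + - (b * qform s M y)] (mod int Q)"
        by (intro cong_add cong_scalar_left c1 cong_refl)
      have c3: "b * (qform s M y + 2 * (\<Sum>i<s. y i * Mv s M h i) + qform s M h) + - (b * qform s M y)
          = b * qform s M h + 2 * b * (\<Sum>i<s. y i * Mv s M h i)"
        by (simp add: algebra_simps)
      have "[b * qform s M (sh s Q h y) + - (b * qform s M y)
          = b * qform s M h + 2 * b * (\<Sum>i<s. y i * Mv s M h i)] (mod int Q)"
        using c2 unfolding c3 .
      then have "ee Q (b * qform s M (sh s Q h y) + - (b * qform s M y))
          = ee Q (b * qform s M h + 2 * b * (\<Sum>i<s. y i * Mv s M h i))"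
        by (rule ee_cong[OF Q])
      then show "?F (sh s Q h y) * cnj (?F y) = G h y"
        unfolding G_def cnj_ee by (simp only: ee_add[symmetric])
    qed
    finally show ?thesis .
  qed
  have "?S * cnj ?S = (\<Sum>x\<in>?X. \<Sum>y\<in>?X. ?F x * cnj (?F y))"
    by (simp add: sum_product)
  also have "\<dots> = (\<Sum>y\<in>?X. \<Sum>x\<in>?X. ?F x * cnj (?F y))"
    by (rule sum.swap)
  also have "\<dots> = (\<Sum>y\<in>?X. \<Sum>h\<in>?H. G h y)"
    by (intro sum.cong refl inner)
  also have "\<dots> = (\<Sum>h\<in>?H. \<Sum>y\<in>?X. G h y)"
    by (rule sum.swap)
  also have "\<dots> = (\<Sum>h\<in>?H. ee Q (b * qform s M h) * (\<Sum>y\<in>?X. ee Q (2 * b * (\<Sum>i<s. y i * Mv s M h i))))"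
    unfolding G_def by (simp add: sum_distrib_left)
  finally have eq: "?S * cnj ?S = \<dots>" .
  have bound: "cmod (\<Sum>y\<in>?X. ee Q (2 * b * (\<Sum>i<s. y i * Mv s M h i)))
      \<le> (if ?P h then real (card ?X) else 0)" for h
  proof (cases "?P h")
    case True
    have "cmod (\<Sum>y\<in>?X. ee Q (2 * b * (\<Sum>i<s. y i * Mv s M h i)))
        \<le> (\<Sum>y\<in>?X. cmod (ee Q (2 * b * (\<Sum>i<s. y i * Mv s M h i))))"
      by (rule norm_sum)
    then show ?thesis using True by simp
  next
    case False
    then obtain i where i: "i < s" and nd: "\<not> int Q dvd 2 * m * Mv s M h i" by blast
    have "\<not> int Q dvd (2 * b) * m * Mv s M h i"
    proof
      assume "int Q dvd (2 * b) * m * Mv s M h i"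
      then have "int Q dvd b * (2 * m * Mv s M h i)" by (simp add: algebra_simps)
      then have "int Q dvd 2 * m * Mv s M h i"
        using b by (metis coprime_commute coprime_dvd_mult_right_iff)
      then show False using nd by simp
    qed
    then have "(\<Sum>y\<in>?X. ee Q (2 * b * (\<Sum>j<s. y j * Mv s M h j))) = 0"
      by (rule char_zero[OF Q m i])
    then show ?thesis using False by simp
  qed
  have "(cmod ?S)^2 = cmod (?S * cnj ?S)" by (simp only: complex_mod_mult_cnj)
  also have "\<dots> \<le> (\<Sum>h\<in>?H. cmod (ee Q (b * qform s M h) * (\<Sum>y\<in>?X. ee Q (2 * b * (\<Sum>i<s. y i * Mv s M h i)))))"
    unfolding eq by (rule norm_sum)
  also have "\<dots> \<le> (\<Sum>h\<in>?H. if ?P h then real (card ?X) else 0)"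
    by (intro sum_mono) (simp add: norm_mult bound)
  also have "\<dots> = real (card ?X) * real (card {h\<in>?H. ?P h})"
    by (simp add: sum.If_cases Int_def)
  also have "\<dots> \<le> real (card ?X) * real (card {h\<in>box s Q. ?P h})"
  proof -
    have "card {h\<in>?H. ?P h} \<le> card {h\<in>box s Q. ?P h}"
      by (rule card_mono) (simp, unfold cset_def, blast)
    then show ?thesis by (intro mult_left_mono) simp_all
  qed
  finally show ?thesis .
qed

lemma count_1d:
  assumes Q: "Q > 0" and a: "a \<noteq> 0"
  shows "card {t \<in> {0..<int Q}. int Q dvd a * t + e} \<le> 2 * nat \<bar>a\<bar>"
proof (cases "{t \<in> {0..<int Q}. int Q dvd a * t + e} = {}")
  case True then show ?thesis by (simp only: card.empty)
next
  case False
  let ?T = "{t \<in> {0..<int Q}. int Q dvd a * t + e}"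
  obtain t0 where t0: "t0 \<in> ?T" using False by blast
  define \<phi> where "\<phi> = (\<lambda>t. (a * (t - t0)) div int Q)"
  have dv: "int Q dvd a * (t - t0)" if "t \<in> ?T" for t
  proof -
    have "int Q dvd (a * t + e) - (a * t0 + e)" using that t0 by (intro dvd_diff) auto
    then show ?thesis by (simp add: algebra_simps)
  qed
  have eq: "a * (t - t0) = int Q * \<phi> t" if "t \<in> ?T" for t
    using dv[OF that] unfolding \<phi>_def by simp
  have "inj_on \<phi> ?T"
  proof
    fix t t' assume t: "t \<in> ?T" and t': "t' \<in> ?T" and e: "\<phi> t = \<phi> t'"
    have "a * (t - t0) = a * (t' - t0)" using eq[OF t] eq[OF t'] e by simp
    then show "t = t'" using a by simp
  qed
  moreover have "\<phi> ` ?T \<subseteq> {-\<bar>a\<bar><..<\<bar>a\<bar>}"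
  proof
    fix k assume "k \<in> \<phi> ` ?T"
    then obtain t where t: "t \<in> ?T" and k: "k = \<phi> t" by blast
    have "\<bar>t - t0\<bar> < int Q" using t t0 by auto
    then have "\<bar>a\<bar> * \<bar>t - t0\<bar> < \<bar>a\<bar> * int Q \<or> t = t0"
      using a by (cases "t = t0") (auto intro: mult_strict_left_mono)
    then have "\<bar>int Q * k\<bar> < \<bar>a\<bar> * int Q \<or> k = 0"
      using eq[OF t] k a by (auto simp: abs_mult \<phi>_def)
    then have "int Q * \<bar>k\<bar> < int Q * \<bar>a\<bar> \<or> k = 0"
      using Q by (simp add: abs_mult algebra_simps)
    then have "\<bar>k\<bar> < \<bar>a\<bar>" using a Q by (auto simp: mult_less_cancel_left)
    then show "k \<in> {-\<bar>a\<bar><..<\<bar>a\<bar>}" by auto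
  qed
  ultimately have "card ?T \<le> card {-\<bar>a\<bar><..<\<bar>a\<bar>}"
    by (metis card_image card_mono finite_greaterThanLessThan_int)
  also have "\<dots> \<le> 2 * nat \<bar>a\<bar>" by simp
  finally show ?thesis .
qed

lemma count_main:
  fixes c D :: int and col \<rho> :: "nat \<Rightarrow> nat" and w :: "nat \<Rightarrow> nat \<Rightarrow> int"
  assumes Q: "Q > 0" and c: "c \<noteq> 0" and D: "D \<noteq> 0"
    and col: "\<And>k. k < 5 \<Longrightarrow> col k < s" and rho: "\<And>i. i < n \<Longrightarrow> \<rho> i < s"
    and W: "\<And>k k'. k < 5 \<Longrightarrow> k' < 5 \<Longrightarrow> (\<Sum>i<n. w k i * M $$ (\<rho> i, col k')) = (if k = k' then D else 0)"
  shows "card {h\<in>box s Q. \<forall>i<s. int Q dvd c * Mv s M h i} \<le> (10 * nat \<bar>c * D\<bar>) ^ 5 * Q ^ (s - 5)"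
proof -
  define Wk where "Wk = (\<lambda>k j. \<Sum>i<n. w k i * M $$ (\<rho> i, j))"
  define C where "C = col ` {..<5::nat}"
  define R where "R = {..<s} - C"
  define E where "E = (\<lambda>k (g :: nat \<Rightarrow> int). \<Sum>j\<in>R. Wk k j * g j)"
  define Y where "Y = {h\<in>box s Q. \<forall>i<s. int Q dvd c * Mv s M h i}"
  have inj: "inj_on col {..<5}"
  proof
    fix k k' assume k: "k \<in> {..<5::nat}" and k': "k' \<in> {..<5::nat}" and e: "col k = col k'"
    show "k = k'"
    proof (rule ccontr)
      assume ne: "k \<noteq> k'"
      have "D = (\<Sum>i<n. w k i * M $$ (\<rho> i, col k))" using W[of k k] k by simp
      also have "\<dots> = (\<Sum>i<n. w k i * M $$ (\<rho> i, col k'))" using e by simp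
      also have "\<dots> = 0" using W[of k k'] k k' ne by simp
      finally show False using D by simp
    qed
  qed
  have C_sub: "C \<subseteq> {..<s}" using col unfolding C_def by auto
  have cardC: "card C = 5" unfolding C_def using card_image[OF inj] by simp
  have cardR: "card R = s - 5" unfolding R_def using card_Diff_subset[OF _ C_sub] cardC
    by (simp add: finite_subset[OF C_sub])
  have key: "int Q dvd (c * D) * h (col k) + c * E k h" if h: "h \<in> Y" and k: "k < 5" for h k
  proof -
    have "int Q dvd (\<Sum>i<n. w k i * (c * Mv s M h (\<rho> i)))"
    proof (rule dvd_sum)
      fix i assume "i \<in> {..<n}"
      then have "\<rho> i < s" using rho by simp
      then have "int Q dvd c * Mv s M h (\<rho> i)" using h unfolding Y_def by simp
      then show "int Q dvd w k i * (c * Mv s M h (\<rho> i))" by (rule dvd_mult)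
    qed
    also have "(\<Sum>i<n. w k i * (c * Mv s M h (\<rho> i))) = c * (\<Sum>j<s. Wk k j * h j)"
    proof -
      have "(\<Sum>i<n. w k i * (c * Mv s M h (\<rho> i))) = c * (\<Sum>i<n. \<Sum>j<s. w k i * M $$ (\<rho> i, j) * h j)"
      proof -
        have "w k i * (c * (\<Sum>j<s. M $$ (\<rho> i, j) * h j)) = c * (\<Sum>j<s. w k i * M $$ (\<rho> i, j) * h j)" for i
          by (simp add: sum_distrib_left mult.assoc mult.left_commute)
        then show ?thesis unfolding Mv_def by (simp add: sum_distrib_left)
      qed
      also have "(\<Sum>i<n. \<Sum>j<s. w k i * M $$ (\<rho> i, j) * h j) = (\<Sum>j<s. \<Sum>i<n. w k i * M $$ (\<rho> i, j) * h j)"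
        by (rule sum.swap)
      also have "\<dots> = (\<Sum>j<s. Wk k j * h j)"
        unfolding Wk_def by (simp add: sum_distrib_right)
      finally show ?thesis .
    qed
    also have "(\<Sum>j<s. Wk k j * h j) = (\<Sum>j\<in>R. Wk k j * h j) + (\<Sum>j\<in>C. Wk k j * h j)"
      unfolding R_def by (rule sum.subset_diff[OF C_sub]) simp
    also have "(\<Sum>j\<in>C. Wk k j * h j) = (\<Sum>k'<5. Wk k (col k') * h (col k'))"
      unfolding C_def by (rule sum.reindex[OF inj, unfolded comp_def])
    also have "\<dots> = (\<Sum>k'<5. (if k = k' then D * h (col k') else 0))"
      using k by (intro sum.cong refl) (simp add: Wk_def W)
    also have "\<dots> = D * h (col k)" using k by simp
    finally show ?thesis unfolding E_def by (simp add: algebra_simps)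
  qed
  define T where "T = (\<lambda>g. \<Union>k<5. {t \<in> {0..<int Q}. int Q dvd (c * D) * t + c * E k g})"
  have cardT: "card (T g) \<le> 10 * nat \<bar>c * D\<bar>" for g
  proof -
    have "card (T g) \<le> (\<Sum>k<5. card {t \<in> {0..<int Q}. int Q dvd (c * D) * t + c * E k g})"
      unfolding T_def by (rule card_UN_le) simp
    also have "\<dots> \<le> (\<Sum>k<(5::nat). 2 * nat \<bar>c * D\<bar>)"
      by (intro sum_mono count_1d Q) (use c D in simp)
    finally show ?thesis by simp
  qed
  have finT: "finite (T g)" for g unfolding T_def
    by (intro finite_UN_I) (auto intro: finite_subset[of _ "{0..<int Q}"])
  define \<Phi> where "\<Phi> = (\<lambda>h :: nat \<Rightarrow> int. (restrict h R, restrict (\<lambda>k. h (col k)) {..<5}))"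
  have E_restrict: "E k (restrict h R) = E k h" for k h unfolding E_def by (intro sum.cong) auto
  have "inj_on \<Phi> Y"
  proof
    fix h h' assume h: "h \<in> Y" and h': "h' \<in> Y" and e: "\<Phi> h = \<Phi> h'"
    have hb: "h \<in> box s Q" and hb': "h' \<in> box s Q" using h h' unfolding Y_def by auto
    show "h = h'"
    proof (rule box_eqI[OF hb hb'])
      fix j assume j: "j < s"
      show "h j = h' j"
      proof (cases "j \<in> C")
        case True
        then obtain k where k: "k < 5" and jk: "j = col k" unfolding C_def by auto
        have "restrict (\<lambda>k. h (col k)) {..<5} k = restrict (\<lambda>k. h' (col k)) {..<5} k"
          using e unfolding \<Phi>_def by simp
        then show ?thesis using k jk by simp
      next
        case False
        then have "j \<in> R" unfolding R_def using j by simp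
        moreover have "restrict h R j = restrict h' R j" using e unfolding \<Phi>_def by simp
        ultimately show ?thesis by simp
      qed
    qed
  qed
  moreover have "\<Phi> ` Y \<subseteq> Sigma (R \<rightarrow>\<^sub>E {0..<int Q}) (\<lambda>g. {..<5} \<rightarrow>\<^sub>E T g)"
  proof
    fix z assume "z \<in> \<Phi> ` Y"
    then obtain h where h: "h \<in> Y" and z: "z = \<Phi> h" by blast
    have hb: "h \<in> box s Q" using h unfolding Y_def by auto
    have "restrict h R \<in> R \<rightarrow>\<^sub>E {0..<int Q}"
      using box_memD[OF hb] unfolding R_def by (simp add: restrict_PiE_iff)
    moreover have "restrict (\<lambda>k. h (col k)) {..<5} \<in> {..<5} \<rightarrow>\<^sub>E T (restrict h R)"
    proof -
      have "h (col k) \<in> T (restrict h R)" if k: "k < 5" for k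
      proof -
        have "0 \<le> h (col k) \<and> h (col k) < int Q" using box_memD[OF hb col[OF k]] .
        moreover have "int Q dvd (c * D) * h (col k) + c * E k (restrict h R)"
          using key[OF h k] by (simp add: E_restrict)
        ultimately show ?thesis unfolding T_def using k by auto
      qed
      then show ?thesis by (simp add: restrict_PiE_iff)
    qed
    ultimately show "z \<in> Sigma (R \<rightarrow>\<^sub>E {0..<int Q}) (\<lambda>g. {..<5} \<rightarrow>\<^sub>E T g)"
      unfolding z \<Phi>_def by simp
  qed
  moreover have finR: "finite R" unfolding R_def by simp
  ultimately have sub: "\<Phi> ` Y \<subseteq> Sigma (R \<rightarrow>\<^sub>E {0..<int Q}) (\<lambda>g. {..<5::nat} \<rightarrow>\<^sub>E T g)"
     and injP: "inj_on \<Phi> Y" by blast+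
  have finA: "finite (R \<rightarrow>\<^sub>E {0..<int Q})" using finR by (rule finite_PiE) simp
  have finB: "\<forall>g\<in>R \<rightarrow>\<^sub>E {0..<int Q}. finite ({..<5::nat} \<rightarrow>\<^sub>E T g)"
    using finT by (simp add: finite_PiE)
  have finS: "finite (Sigma (R \<rightarrow>\<^sub>E {0..<int Q}) (\<lambda>g. {..<5::nat} \<rightarrow>\<^sub>E T g))"
    by (rule finite_SigmaI[OF finA]) (use finB in blast)
  have "card Y = card (\<Phi> ` Y)" by (rule card_image[OF injP, symmetric])
  also have "\<dots> \<le> card (Sigma (R \<rightarrow>\<^sub>E {0..<int Q}) (\<lambda>g. {..<5::nat} \<rightarrow>\<^sub>E T g))"
    by (rule card_mono[OF finS sub])
  also have "\<dots> = (\<Sum>g\<in>R \<rightarrow>\<^sub>E {0..<int Q}. card ({..<5::nat} \<rightarrow>\<^sub>E T g))"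
    by (rule card_SigmaI[OF finA finB])
  also have "\<dots> = (\<Sum>g\<in>R \<rightarrow>\<^sub>E {0..<int Q}. card (T g) ^ 5)"
    by (intro sum.cong refl) (simp add: card_PiE)
  also have "\<dots> \<le> (\<Sum>g\<in>R \<rightarrow>\<^sub>E {0..<int Q}. (10 * nat \<bar>c * D\<bar>) ^ 5)"
    by (intro sum_mono power_mono cardT) simp
  also have "\<dots> = card (R \<rightarrow>\<^sub>E {0..<int Q}) * (10 * nat \<bar>c * D\<bar>) ^ 5"
    by simp
  also have "card (R \<rightarrow>\<^sub>E {0..<int Q}) = Q ^ (s - 5)"
    using cardR by (simp add: card_PiE finR)
  finally show ?thesis unfolding Y_def by (simp add: mult.commute)
qed

lemma rank_off_witness:
  assumes "rank_off s M \<ge> 5"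
  shows "\<exists>I J. I \<subseteq> {..<s} \<and> J \<subseteq> {..<s} \<and> I \<inter> J = {} \<and> card I = card J \<and>
     vec_space.rank (card I) (submatrix (map_mat rat_of_int M) I J) \<ge> 5"
proof -
  let ?f = "\<lambda>(I, J). vec_space.rank (card I) (submatrix (map_mat rat_of_int M) I J)"
  let ?S = "{vec_space.rank (card I) (submatrix (map_mat rat_of_int M) I J) | I J.
      I \<subseteq> {..<s} \<and> J \<subseteq> {..<s} \<and> I \<inter> J = {} \<and> card I = card J}"
  have "?S \<subseteq> ?f ` (Pow {..<s} \<times> Pow {..<s})" by auto
  then have fin: "finite ?S" by (rule finite_subset) simp
  have ne: "?S \<noteq> {}" by blast
  have "Max ?S \<in> ?S" using Max_in[OF fin ne] .
  moreover have "Max ?S \<ge> 5" using assms unfolding rank_off_def .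
  ultimately obtain I J where "I \<subseteq> {..<s}" "J \<subseteq> {..<s}" "I \<inter> J = {}" "card I = card J"
     "5 \<le> vec_space.rank (card I) (submatrix (map_mat rat_of_int M) I J)"
    by (smt (verit, ccfv_SIG) mem_Collect_eq)
  then show ?thesis by blast
qed


lemma int_self_scalar_zero:
  fixes u :: "int vec"
  assumes u: "u \<in> carrier_vec n" and z: "u \<bullet> u = 0"
  shows "u = 0\<^sub>v n"
proof (rule eq_vecI)
  show "dim_vec u = dim_vec (0\<^sub>v n)" using u by simp
  fix i assume i: "i < dim_vec (0\<^sub>v n)"
  have "(\<Sum>j\<in>{0..<n}. u $ j * u $ j) = 0" using z u unfolding scalar_prod_def by simp
  then have "\<forall>j\<in>{0..<n}. u $ j * u $ j = 0"
    by (subst sum_nonneg_eq_0_iff[symmetric]) auto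
  then show "u $ i = 0\<^sub>v n $ i" using i by auto
qed


lemma minor_data:
  assumes M: "M \<in> carrier_mat s s" and r: "rank_off s M \<ge> 5"
  shows "\<exists>D n (\<rho>::nat\<Rightarrow>nat) (col::nat\<Rightarrow>nat) (w::nat\<Rightarrow>nat\<Rightarrow>int). D \<noteq> (0::int) \<and> (\<forall>k<5. col k < s) \<and> (\<forall>i<n. \<rho> i < s) \<and>
     (\<forall>k<5. \<forall>k'<5. (\<Sum>i<n. w k i * M $$ (\<rho> i, col k')) = (if k = k' then D else 0))"
proof -
  obtain I J where I: "I \<subseteq> {..<s}" and J: "J \<subseteq> {..<s}"
    and rk: "vec_space.rank (card I) (submatrix (map_mat rat_of_int M) I J) \<ge> 5"
    using rank_off_witness[OF r] by blast
  define A where "A = submatrix (map_mat rat_of_int M) I J"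
  define nr where "nr = card I"
  define nc where "nc = card J"
  have cI: "card {i. i < s \<and> i \<in> I} = nr" unfolding nr_def using I
    by (metis (no_types, lifting) Collect_cong lessThan_iff subset_iff Collect_mem_eq)
  have cJ: "card {i. i < s \<and> i \<in> J} = nc" unfolding nc_def using J
    by (metis (no_types, lifting) Collect_cong lessThan_iff subset_iff Collect_mem_eq)
  have dimM: "dim_row (map_mat rat_of_int M) = s" "dim_col (map_mat rat_of_int M) = s"
    "dim_row M = s" "dim_col M = s" using M by auto
  have A: "A \<in> carrier_mat nr nc" unfolding A_def
    by (rule carrier_matI) (simp_all add: dim_submatrix dimM cI cJ)
  have pickI: "pick I i < s" if "i < nr" for i using pick_le[of i s I] that cI by simp
  have pickJ: "pick J l < s" if "l < nc" for l using pick_le[of l s J] that cJ by simp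
  have Aidx: "A $$ (i, l) = rat_of_int (M $$ (pick I i, pick J l))" if "i < nr" "l < nc" for i l
  proof -
    have "A $$ (i, l) = map_mat rat_of_int M $$ (pick I i, pick J l)"
      unfolding A_def by (rule submatrix_index) (use that in \<open>simp_all add: dimM cI cJ\<close>)
    also have "\<dots> = rat_of_int (M $$ (pick I i, pick J l))"
      using pickI[OF that(1)] pickJ[OF that(2)] M by simp
    finally show ?thesis .
  qed
  interpret V: vec_space "TYPE(rat)" nr .
  have rkA: "V.rank A \<ge> 5" using rk unfolding A_def nr_def .
  obtain S where max: "maximal S (\<lambda>T. T \<subseteq> set (cols A) \<and> V.lin_indpt T)"
    using maximal_exists[of "(\<lambda>T. T \<subseteq> set (cols A) \<and> V.lin_indpt T)" "card (set (cols A))" "{}"]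
    by (meson List.finite_set card_mono empty_iff empty_subsetI V.finite_lin_indpt2 rev_finite_subset)
  have "V.rank A = card S" by (rule V.rank_card_indpt[OF A max])
  with rkA have cS: "card S \<ge> 5" by simp
  have Ssub: "S \<subseteq> set (cols A)" and Sli: "V.lin_indpt S" using max unfolding maximal_def by auto
  obtain S5 where S5: "S5 \<subseteq> S" "card S5 = 5" "finite S5" using obtain_subset_with_card_n[OF cS] by blast
  have S5li: "V.lin_indpt S5" using V.subset_li_is_li[OF Sli S5(1)] .
  obtain vs where vs: "set vs = S5" "distinct vs" using finite_distinct_list[OF S5(3)] by blast
  have lvs: "length vs = 5" using distinct_card[OF vs(2)] vs(1) S5(2) by simp
  have "\<forall>k. \<exists>l. k < 5 \<longrightarrow> l < nc \<and> vs ! k = col A l"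
  proof
    fix k show "\<exists>l. k < 5 \<longrightarrow> l < nc \<and> vs ! k = col A l"
    proof (cases "k < 5")
      case True
      then have "vs ! k \<in> set (cols A)" using lvs vs(1) S5(1) Ssub by (metis nth_mem subsetD)
      then obtain l where "l < dim_col A" "vs ! k = col A l"
        unfolding cols_def by auto
      then show ?thesis using A by auto
    qed simp
  qed
  then obtain lk where lk: "\<And>k. k < 5 \<Longrightarrow> lk k < nc \<and> vs ! k = col A (lk k)" by metis
  define B :: "int mat" where "B = mat nr 5 (\<lambda>(i, k). M $$ (pick I i, pick J (lk k)))"
  have B: "B \<in> carrier_mat nr 5" unfolding B_def by simp
  define Ar where "Ar = map_mat rat_of_int B"
  have Ar: "Ar \<in> carrier_mat nr 5" unfolding Ar_def using B by simp
  have colsAr: "cols Ar = vs"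
  proof (rule nth_equalityI)
    show "length (cols Ar) = length vs" using Ar lvs by simp
    fix k assume "k < length (cols Ar)"
    then have k: "k < 5" using Ar by simp
    show "cols Ar ! k = vs ! k"
    proof (rule eq_vecI)
      show "dim_vec (cols Ar ! k) = dim_vec (vs ! k)" using Ar k lk[OF k] A by simp
      fix i assume "i < dim_vec (vs ! k)"
      then have i: "i < nr" using lk[OF k] A by simp
      have "cols Ar ! k $ i = rat_of_int (M $$ (pick I i, pick J (lk k)))"
        using Ar k i unfolding Ar_def B_def by simp
      also have "\<dots> = A $$ (i, lk k)" using Aidx[OF i] lk[OF k] by simp
      also have "\<dots> = vs ! k $ i" using lk[OF k] i A by simp
      finally show "cols Ar ! k $ i = vs ! k $ i" .
    qed
  qed
  have Arli: "V.lin_indpt (set (cols Ar))" using S5li vs(1) colsAr by simp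
  have Ardist: "distinct (cols Ar)" using vs(2) colsAr by simp
  define G where "G = transpose_mat B * B"
  have G: "G \<in> carrier_mat 5 5" unfolding G_def using B by simp
  define D where "D = det G"
  have D: "D \<noteq> 0"
  proof
    assume "D = 0"
    then obtain v where v: "v \<in> carrier_vec 5" "v \<noteq> 0\<^sub>v 5" "G *\<^sub>v v = 0\<^sub>v 5"
      using det_0_iff_vec_prod_zero[OF G] unfolding D_def by blast
    define u where "u = B *\<^sub>v v"
    have u: "u \<in> carrier_vec nr" unfolding u_def using B v by simp
    have "G *\<^sub>v v = transpose_mat B *\<^sub>v u" unfolding G_def u_def
      using B v by (simp add: assoc_mult_mat_vec[of _ 5 nr B 5 v])
    then have "(transpose_mat B *\<^sub>v u) \<bullet> v = 0\<^sub>v 5 \<bullet> v" using v(3) by simp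
    also have "\<dots> = 0" using v(1) by simp
    finally have "(transpose_mat B *\<^sub>v u) \<bullet> v = 0" .
    moreover have "(transpose_mat B *\<^sub>v u) \<bullet> v = u \<bullet> u"
      using transpose_vec_mult_scalar[OF B v(1) u] unfolding u_def by simp
    ultimately have "u = 0\<^sub>v nr" using int_self_scalar_zero[OF u] by simp
    define v' where "v' = map_vec rat_of_int v"
    have v': "v' \<in> carrier_vec 5" unfolding v'_def using v by simp
    have v'0: "v' \<noteq> 0\<^sub>v 5"
    proof
      assume "v' = 0\<^sub>v 5"
      then have "v = 0\<^sub>v 5" unfolding v'_def using v(1)
        by (intro eq_vecI) (auto dest!: arg_cong[of _ _ "\<lambda>x. x $ _"])
      then show False using v(2) by simp
    qed
    have "Ar *\<^sub>v v' = 0\<^sub>v nr"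
    proof (rule eq_vecI)
      show "dim_vec (Ar *\<^sub>v v') = dim_vec (0\<^sub>v nr)" using Ar by simp
      fix i assume "i < dim_vec (0\<^sub>v nr)"
      then have i: "i < nr" by simp
      have "(Ar *\<^sub>v v') $ i = rat_of_int ((B *\<^sub>v v) $ i)"
        using i Ar B v unfolding Ar_def v'_def
        by (simp add: scalar_prod_def)
      also have "\<dots> = 0" using \<open>u = 0\<^sub>v nr\<close> i unfolding u_def by simp
      finally show "(Ar *\<^sub>v v') $ i = 0\<^sub>v nr $ i" using i by simp
    qed
    then have "V.lin_dep (set (cols Ar))" by (rule V.lin_depI[OF Ar v' v'0 _ Ardist])
    then show False using Arli by simp
  qed
  define W where "W = adj_mat G * transpose_mat B"
  have WB: "W * B = D \<cdot>\<^sub>m 1\<^sub>m 5"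
  proof -
    have "W * B = adj_mat G * (transpose_mat B * B)" unfolding W_def
      using adj_mat(1)[OF G] B by (simp add: assoc_mult_mat[of _ 5 5 _ nr B 5])
    also have "\<dots> = D \<cdot>\<^sub>m 1\<^sub>m 5" unfolding D_def using adj_mat(3)[OF G] unfolding G_def by simp
    finally show ?thesis .
  qed
  have W: "W \<in> carrier_mat 5 nr" unfolding W_def using adj_mat(1)[OF G] B by simp
  have key: "(\<Sum>i<nr. W $$ (k, i) * M $$ (pick I i, pick J (lk k'))) = (if k = k' then D else 0)"
    if k: "k < 5" and k': "k' < 5" for k k'
  proof -
    have "(W * B) $$ (k, k') = (\<Sum>i\<in>{0..<nr}. W $$ (k, i) * B $$ (i, k'))"
      using W B k k' by (simp add: scalar_prod_def)
    also have "\<dots> = (\<Sum>i<nr. W $$ (k, i) * M $$ (pick I i, pick J (lk k')))"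
      using k' unfolding B_def by (simp add: atLeast0LessThan)
    finally have "(W * B) $$ (k, k') = (\<Sum>i<nr. W $$ (k, i) * M $$ (pick I i, pick J (lk k')))" .
    moreover have "(W * B) $$ (k, k') = (if k = k' then D else 0)" using WB k k' by simp
    ultimately show ?thesis by simp
  qed
  show ?thesis
    apply (rule exI[of _ D], rule exI[of _ nr], rule exI[of _ "pick I"], rule exI[of _ "\<lambda>k. pick J (lk k)"],
      rule exI[of _ "\<lambda>k i. W $$ (k, i)"])
    using D pickI pickJ lk key by auto
qed

definition inv_mod :: "nat \<Rightarrow> nat \<Rightarrow> ((nat \<Rightarrow> int) \<Rightarrow> bool) \<Rightarrow> bool" where
  "inv_mod s Q Pr \<longleftrightarrow> (\<forall>x y. (\<forall>j<s. [x j = y j] (mod int Q)) \<longrightarrow> Pr x = Pr y)"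

lemma transfer_box:
  assumes Q: "Q > 0" and inv: "inv_mod s Q Pr"
  shows "card {x \<in> {..<s} \<rightarrow>\<^sub>E {1..int Q}. Pr x} = card {x \<in> box s Q. Pr x}"
proof -
  define \<phi> where "\<phi> = (\<lambda>x :: nat \<Rightarrow> int. restrict (\<lambda>j. x j mod int Q) {..<s})"
  define \<psi> where "\<psi> = (\<lambda>y :: nat \<Rightarrow> int. restrict (\<lambda>j. if y j = 0 then int Q else y j) {..<s})"
  have cg1: "\<forall>j<s. [\<phi> x j = x j] (mod int Q)" for x unfolding \<phi>_def by (simp add: cong_def)
  have cg2: "\<forall>j<s. [\<psi> y j = y j] (mod int Q)" for y unfolding \<psi>_def by (simp add: cong_def)
  have "bij_betw \<phi> {x \<in> {..<s} \<rightarrow>\<^sub>E {1..int Q}. Pr x} {x \<in> box s Q. Pr x}"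
  proof (rule bij_betw_byWitness[where f' = \<psi>])
    show "\<forall>a\<in>{x \<in> {..<s} \<rightarrow>\<^sub>E {1..int Q}. Pr x}. \<psi> (\<phi> a) = a"
    proof
      fix a assume a: "a \<in> {x \<in> {..<s} \<rightarrow>\<^sub>E {1..int Q}. Pr x}"
      then have aP: "a \<in> {..<s} \<rightarrow>\<^sub>E {1..int Q}" by simp
      show "\<psi> (\<phi> a) = a"
      proof
        fix j show "\<psi> (\<phi> a) j = a j"
        proof (cases "j < s")
          case True
          then have "1 \<le> a j \<and> a j \<le> int Q" using PiE_mem[OF aP, of j] by simp
          then show ?thesis using True unfolding \<psi>_def \<phi>_def
            by (cases "a j = int Q") (auto simp: zmod_trivial_iff)
        next
          case False
          then show ?thesis using PiE_arb[OF aP, of j] unfolding \<psi>_def by simp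
        qed
      qed
    qed
    show "\<forall>a'\<in>{x \<in> box s Q. Pr x}. \<phi> (\<psi> a') = a'"
    proof
      fix a assume a: "a \<in> {x \<in> box s Q. Pr x}"
      then have aP: "a \<in> box s Q" by simp
      show "\<phi> (\<psi> a) = a"
      proof (rule box_eqI[OF _ aP])
        show "\<phi> (\<psi> a) \<in> box s Q" unfolding \<phi>_def using Q by (intro box_restrict) simp
        fix j assume j: "j < s"
        then show "\<phi> (\<psi> a) j = a j" using box_memD[OF aP j] unfolding \<phi>_def \<psi>_def by auto
      qed
    qed
    show "\<phi> ` {x \<in> {..<s} \<rightarrow>\<^sub>E {1..int Q}. Pr x} \<subseteq> {x \<in> box s Q. Pr x}"
    proof
      fix z assume "z \<in> \<phi> ` {x \<in> {..<s} \<rightarrow>\<^sub>E {1..int Q}. Pr x}"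
      then obtain x where x: "Pr x" and z: "z = \<phi> x" by blast
      have "z \<in> box s Q" unfolding z \<phi>_def using Q by (intro box_restrict) simp
      moreover have "Pr z" using inv x cg1[of x] unfolding inv_mod_def z by blast
      ultimately show "z \<in> {x \<in> box s Q. Pr x}" by simp
    qed
    show "\<psi> ` {x \<in> box s Q. Pr x} \<subseteq> {x \<in> {..<s} \<rightarrow>\<^sub>E {1..int Q}. Pr x}"
    proof
      fix z assume "z \<in> \<psi> ` {x \<in> box s Q. Pr x}"
      then obtain y where y: "y \<in> box s Q" "Pr y" and z: "z = \<psi> y" by blast
      have "z \<in> {..<s} \<rightarrow>\<^sub>E {1..int Q}" unfolding z \<psi>_def restrict_PiE_iff
        using box_memD[OF y(1)] Q by force
      moreover have "Pr z" using inv y(2) cg2[of y] unfolding inv_mod_def z by blast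
      ultimately show "z \<in> {x \<in> {..<s} \<rightarrow>\<^sub>E {1..int Q}. Pr x}" by simp
    qed
  qed
  then show ?thesis by (rule bij_betw_same_card)
qed

lemma fiber_card:
  assumes Q: "Q > 0" and p: "p > 0" and inv: "inv_mod s Q Pr"
  shows "card {x \<in> box s (p * Q). Pr x} = p ^ s * card {x \<in> box s Q. Pr x}"
proof -
  define \<phi> where "\<phi> = (\<lambda>x :: nat \<Rightarrow> int. (restrict (\<lambda>j. x j mod int Q) {..<s}, restrict (\<lambda>j. x j div int Q) {..<s}))"
  define \<psi> :: "(nat \<Rightarrow> int) \<times> (nat \<Rightarrow> int) \<Rightarrow> (nat \<Rightarrow> int)"
    where "\<psi> = (\<lambda>(y, z). restrict (\<lambda>j. y j + int Q * z j) {..<s})"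
  have "bij_betw \<phi> {x \<in> box s (p * Q). Pr x} ({y \<in> box s Q. Pr y} \<times> box s p)"
  proof (rule bij_betw_byWitness[where f' = \<psi>])
    show "\<forall>a\<in>{x \<in> box s (p * Q). Pr x}. \<psi> (\<phi> a) = a"
    proof
      fix a assume "a \<in> {x \<in> box s (p * Q). Pr x}"
      then have aP: "a \<in> box s (p * Q)" by simp
      show "\<psi> (\<phi> a) = a"
      proof
        fix j show "\<psi> (\<phi> a) j = a j"
        proof (cases "j < s")
          case True then show ?thesis unfolding \<psi>_def \<phi>_def by simp
        next
          case False then show ?thesis using box_memD2[OF aP, of j] unfolding \<psi>_def \<phi>_def by simp
        qed
      qed
    qed
    show "\<forall>a'\<in>{y \<in> box s Q. Pr y} \<times> box s p. \<phi> (\<psi> a') = a'"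
    proof
      fix a assume "a \<in> {y \<in> box s Q. Pr y} \<times> box s p"
      then obtain y z where a: "a = (y, z)" and y: "y \<in> box s Q" and z: "z \<in> box s p" by auto
      have "restrict (\<lambda>j. \<psi> (y, z) j mod int Q) {..<s} = y"
      proof (rule box_eqI[OF _ y])
        show "restrict (\<lambda>j. \<psi> (y, z) j mod int Q) {..<s} \<in> box s Q" using Q by (intro box_restrict) simp
        fix j assume j: "j < s"
        then show "restrict (\<lambda>j. \<psi> (y, z) j mod int Q) {..<s} j = y j"
          using box_memD[OF y j] unfolding \<psi>_def by simp
      qed
      moreover have "restrict (\<lambda>j. \<psi> (y, z) j div int Q) {..<s} = z"
      proof (rule box_eqI[OF _ z])
        show "restrict (\<lambda>j. \<psi> (y, z) j div int Q) {..<s} \<in> box s p"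
          using box_memD[OF y] box_memD[OF z] Q unfolding \<psi>_def
          by (intro box_restrict) simp
        fix j assume j: "j < s"
        then show "restrict (\<lambda>j. \<psi> (y, z) j div int Q) {..<s} j = z j"
          using box_memD[OF y j] Q unfolding \<psi>_def by simp
      qed
      ultimately show "\<phi> (\<psi> a) = a" unfolding a \<phi>_def by simp
    qed
    show "\<phi> ` {x \<in> box s (p * Q). Pr x} \<subseteq> {y \<in> box s Q. Pr y} \<times> box s p"
    proof
      fix w assume "w \<in> \<phi> ` {x \<in> box s (p * Q). Pr x}"
      then obtain x where x: "x \<in> box s (p * Q)" "Pr x" and w: "w = \<phi> x" by blast
      have "fst w \<in> box s Q" unfolding w \<phi>_def fst_conv using Q by (intro box_restrict) simp
      moreover have "Pr (fst w)"
      proof -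
        have "\<forall>j<s. [fst (\<phi> x) j = x j] (mod int Q)" unfolding \<phi>_def by (simp add: cong_def)
        then show ?thesis using inv x(2) unfolding inv_mod_def w by blast
      qed
      moreover have "snd w \<in> box s p"
      proof -
        have "0 \<le> x j div int Q \<and> x j div int Q < int p" if j: "j < s" for j
        proof -
          have b: "0 \<le> x j" "x j < int Q * int p" using box_memD[OF x(1) j] by (auto simp: mult.commute)
          have "int Q * (x j div int Q) \<le> x j" using Q
          proof -
            have "0 \<le> x j mod int Q" using Q by simp
            moreover have "int Q * (x j div int Q) + x j mod int Q = x j" by (rule mult_div_mod_eq)
            ultimately show ?thesis by linarith
          qed
          then have "int Q * (x j div int Q) < int Q * int p" using b by simp
          then have "x j div int Q < int p" using Q by (simp add: mult_less_cancel_left)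
          moreover have "0 \<le> x j div int Q" using b(1) Q by (simp add: pos_imp_zdiv_nonneg_iff)
          ultimately show ?thesis by simp
        qed
        then show ?thesis unfolding w \<phi>_def snd_conv by (intro box_restrict) simp
      qed
      ultimately show "w \<in> {y \<in> box s Q. Pr y} \<times> box s p" by (simp add: mem_Times_iff)
    qed
    show "\<psi> ` ({y \<in> box s Q. Pr y} \<times> box s p) \<subseteq> {x \<in> box s (p * Q). Pr x}"
    proof
      fix w assume "w \<in> \<psi> ` ({y \<in> box s Q. Pr y} \<times> box s p)"
      then obtain y z where y: "y \<in> box s Q" "Pr y" and z: "z \<in> box s p" and w: "w = \<psi> (y, z)" by blast
      have "w \<in> box s (p * Q)"
      proof -
        have "0 \<le> y j + int Q * z j \<and> y j + int Q * z j < int (p * Q)" if j: "j < s" for j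
        proof -
          have "z j + 1 \<le> int p" using box_memD[OF z j] by simp
          then have "int Q * (z j + 1) \<le> int Q * int p" using Q by (intro mult_left_mono) auto
          then show ?thesis using box_memD[OF y(1) j] box_memD[OF z j] Q by (auto simp: algebra_simps)
        qed
        then show ?thesis unfolding w \<psi>_def prod.case by (intro box_restrict) simp
      qed
      moreover have "Pr w"
      proof -
        have "\<forall>j<s. [w j = y j] (mod int Q)" unfolding w \<psi>_def by (simp add: cong_def)
        then show ?thesis using inv y(2) unfolding inv_mod_def by blast
      qed
      ultimately show "w \<in> {x \<in> box s (p * Q). Pr x}" by simp
    qed
  qed
  then have "card {x \<in> box s (p * Q). Pr x} = card ({y \<in> box s Q. Pr y} \<times> box s p)"
    by (rule bij_betw_same_card)
  also have "\<dots> = p ^ s * card {x \<in> box s Q. Pr x}" by (simp add: card_cartesian_product card_box)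
  finally show ?thesis .
qed

lemma recursion:
  assumes p: "prime p" and Q: "Q > 0" and PQ: "P = p * Q" and inv: "inv_mod s Q Pr"
    and bnd: "\<And>b. coprime b (int p) \<Longrightarrow> cmod (\<Sum>x\<in>{x\<in>box s P. Pr x}. ee P (b * qform s M x)) \<le> Bd"
  shows "\<bar>real (card {x\<in>box s P. Pr x \<and> int P dvd qform s M x}) * real P
      - real p ^ s * real (card {x\<in>box s Q. Pr x \<and> int Q dvd qform s M x}) * real Q\<bar> \<le> real P * Bd"
proof -
  let ?U = "{x\<in>box s P. Pr x}"
  let ?f = "qform s M"
  let ?T = "\<lambda>b. \<Sum>x\<in>?U. ee P (int b * ?f x)"
  have p0: "p > 0" using p prime_gt_0_nat by blast
  have P0: "P > 0" using PQ p0 Q by simp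
  have finU: "finite ?U" by simp
  have c1: "of_nat (card {x\<in>?U. int P dvd ?f x}) * of_nat P = (\<Sum>b<P. ?T b)"
    by (rule fourier_count[OF finU P0])
  have e1: "{x\<in>?U. int P dvd ?f x} = {x\<in>box s P. Pr x \<and> int P dvd ?f x}" by blast
  have c2: "of_nat (card {x\<in>?U. int Q dvd ?f x}) * of_nat Q = (\<Sum>b<Q. \<Sum>x\<in>?U. ee Q (int b * ?f x))"
    by (rule fourier_count[OF finU Q])
  have inv2: "inv_mod s Q (\<lambda>x. Pr x \<and> int Q dvd ?f x)"
    unfolding inv_mod_def
  proof (intro allI impI)
    fix x y :: "nat \<Rightarrow> int" assume h: "\<forall>j<s. [x j = y j] (mod int Q)"
    then have "Pr x = Pr y" using inv unfolding inv_mod_def by blast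
    moreover have "[?f x = ?f y] (mod int Q)" using h by (intro qform_cong) auto
    then have "(int Q dvd ?f x) = (int Q dvd ?f y)" by (rule cong_dvd_iff)
    ultimately show "(Pr x \<and> int Q dvd ?f x) = (Pr y \<and> int Q dvd ?f y)" by simp
  qed
  have e2: "card {x\<in>?U. int Q dvd ?f x} = p ^ s * card {x\<in>box s Q. Pr x \<and> int Q dvd ?f x}"
  proof -
    have "{x\<in>?U. int Q dvd ?f x} = {x\<in>box s (p * Q). Pr x \<and> int Q dvd ?f x}" using PQ by blast
    then show ?thesis using fiber_card[OF Q p0 inv2] by simp
  qed
  have inj: "inj_on (\<lambda>b. p * b) {..<Q}" using p0 by (simp add: inj_on_def)
  have img: "(\<lambda>b. p * b) ` {..<Q} = {..<P} \<inter> {b. p dvd b}"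
  proof
    show "(\<lambda>b. p * b) ` {..<Q} \<subseteq> {..<P} \<inter> {b. p dvd b}" using PQ p0 by auto
    show "{..<P} \<inter> {b. p dvd b} \<subseteq> (\<lambda>b. p * b) ` {..<Q}"
    proof
      fix b assume "b \<in> {..<P} \<inter> {b. p dvd b}"
      then obtain c where c: "b = p * c" and "p * c < p * Q" using PQ by auto
      then have "c < Q" using p0 by simp
      then show "b \<in> (\<lambda>b. p * b) ` {..<Q}" using c by blast
    qed
  qed
  have "(\<Sum>b<Q. \<Sum>x\<in>?U. ee Q (int b * ?f x)) = (\<Sum>b<Q. ?T (p * b))"
  proof (intro sum.cong refl)
    fix b x
    have "ee Q (int b * ?f x) = ee (p * Q) (int p * (int b * ?f x))" by (simp add: ee_scale[OF p0])
    then show "ee Q (int b * ?f x) = ee P (int (p * b) * ?f x)" using PQ by (simp add: mult.assoc)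
  qed
  also have "\<dots> = (\<Sum>b\<in>(\<lambda>b. p * b) ` {..<Q}. ?T b)"
    by (rule sum.reindex[OF inj, symmetric, unfolded comp_def])
  also have "\<dots> = (\<Sum>b\<in>{..<P} \<inter> {b. p dvd b}. ?T b)" using img by simp
  finally have c3: "(\<Sum>b<Q. \<Sum>x\<in>?U. ee Q (int b * ?f x)) = (\<Sum>b\<in>{..<P} \<inter> {b. p dvd b}. ?T b)" .
  have split: "(\<Sum>b<P. ?T b) = (\<Sum>b\<in>{..<P} \<inter> {b. p dvd b}. ?T b) + (\<Sum>b\<in>{..<P} - {b. p dvd b}. ?T b)"
    by (rule sum.Int_Diff) simp
  define R where "R = (\<Sum>b\<in>{..<P} - {b. p dvd b}. ?T b)"
  have eq: "of_nat (card {x\<in>box s P. Pr x \<and> int P dvd ?f x}) * of_nat P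
      = of_nat (p ^ s * card {x\<in>box s Q. Pr x \<and> int Q dvd ?f x}) * of_nat Q + R"
  proof -
    have "of_nat (card {x\<in>box s P. Pr x \<and> int P dvd ?f x}) * of_nat P = (\<Sum>b<P. ?T b)"
      using c1 unfolding e1 .
    also have "\<dots> = (\<Sum>b\<in>{..<P} \<inter> {b. p dvd b}. ?T b) + R" unfolding R_def by (rule split)
    also have "(\<Sum>b\<in>{..<P} \<inter> {b. p dvd b}. ?T b) = of_nat (card {x\<in>?U. int Q dvd ?f x}) * of_nat Q"
      unfolding c2 c3 ..
    also have "of_nat (card {x\<in>?U. int Q dvd ?f x}) = (of_nat (p ^ s * card {x\<in>box s Q. Pr x \<and> int Q dvd ?f x}) :: complex)"
      unfolding e2 ..
    finally show ?thesis .
  qed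
  have Bd0: "0 \<le> Bd"
  proof -
    have "cmod (\<Sum>x\<in>?U. ee P (1 * ?f x)) \<le> Bd" by (rule bnd) simp
    then show ?thesis using norm_ge_zero order_trans by blast
  qed
  have "cmod R \<le> (\<Sum>b\<in>{..<P} - {b. p dvd b}. cmod (?T b))" unfolding R_def by (rule norm_sum)
  also have "\<dots> \<le> (\<Sum>b\<in>{..<P} - {b. p dvd b}. Bd)"
  proof (intro sum_mono)
    fix b assume "b \<in> {..<P} - {b. p dvd b}"
    then have "\<not> p dvd b" by simp
    then have "coprime p b" using p by (simp add: prime_imp_coprime)
    then have "coprime (int b) (int p)" by (simp add: coprime_commute)
    then show "cmod (?T b) \<le> Bd" by (rule bnd)
  qed
  also have "\<dots> = real (card ({..<P} - {b. p dvd b})) * Bd" by simp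
  also have "\<dots> \<le> real P * Bd"
  proof -
    have "card ({..<P} - {b. p dvd b}) \<le> card {..<P}" by (rule card_mono) (simp, blast)
    then show ?thesis using Bd0 by (intro mult_right_mono) auto
  qed
  finally have Rb: "cmod R \<le> real P * Bd" .
  define A where "A = card {x\<in>box s P. Pr x \<and> int P dvd ?f x}"
  define B where "B = card {x\<in>box s Q. Pr x \<and> int Q dvd ?f x}"
  have eq': "of_nat A * of_nat P = of_nat (p ^ s * B) * of_nat Q + R" using eq unfolding A_def B_def .
  have "of_nat A * of_nat P - of_nat (p ^ s * B) * of_nat Q = R"
    unfolding eq' by (rule add_diff_cancel_left')
  moreover have "(of_nat A * of_nat P - of_nat (p ^ s * B) * of_nat Q :: complex)
     = complex_of_real (real A * real P - real p ^ s * real B * real Q)"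
    by simp
  ultimately have "R = complex_of_real (real A * real P - real p ^ s * real B * real Q)" by simp
  then have "cmod R = \<bar>real A * real P - real p ^ s * real B * real Q\<bar>" by (simp only: norm_of_real)
  then show ?thesis using Rb unfolding A_def B_def by simp
qed

definition mdata :: "nat \<Rightarrow> int mat \<Rightarrow> int \<Rightarrow> nat \<Rightarrow> (nat \<Rightarrow> nat) \<Rightarrow> (nat \<Rightarrow> nat) \<Rightarrow> (nat \<Rightarrow> nat \<Rightarrow> int) \<Rightarrow> bool" where
  "mdata s M D n \<rho> cl w \<longleftrightarrow> D \<noteq> 0 \<and> (\<forall>k<5. cl k < s) \<and> (\<forall>i<n. \<rho> i < s) \<and>
     (\<forall>k<5. \<forall>k'<5. (\<Sum>i<n. w k i * M $$ (\<rho> i, cl k')) = (if k = k' then D else 0))"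

lemma mdata_s: assumes "mdata s M D n \<rho> cl w" shows "5 \<le> s"
proof -
  have inj: "inj_on cl {..<5}"
  proof
    fix k k' assume k: "k \<in> {..<5::nat}" and k': "k' \<in> {..<5::nat}" and e: "cl k = cl k'"
    show "k = k'"
    proof (rule ccontr)
      assume ne: "k \<noteq> k'"
      have "D = (\<Sum>i<n. w k i * M $$ (\<rho> i, cl k))" using assms k unfolding mdata_def by simp
      also have "\<dots> = (\<Sum>i<n. w k i * M $$ (\<rho> i, cl k'))" using e by simp
      also have "\<dots> = 0" using assms k k' ne unfolding mdata_def by simp
      finally show False using assms unfolding mdata_def by simp
    qed
  qed
  have "cl ` {..<5} \<subseteq> {..<s}" using assms unfolding mdata_def by auto
  then have "card (cl ` {..<5}) \<le> card {..<s}" by (intro card_mono) auto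
  then show ?thesis using card_image[OF inj] by simp
qed

lemma S_bound:
  assumes md: "mdata s M D n \<rho> cl w" and P: "P > 0" and m: "m > 0" "m dvd int P"
    and b: "coprime b (int P)"
    and symm: "\<And>i j. i < s \<Longrightarrow> j < s \<Longrightarrow> M $$ (i, j) = M $$ (j, i)"
  shows "cmod (\<Sum>x\<in>cset s P m r. ee P (b * qform s M x))
     \<le> sqrt (real ((10 * nat \<bar>2 * m * D\<bar>) ^ 5)) * real P ^ (s - 2)"
proof -
  let ?K = "real ((10 * nat \<bar>2 * m * D\<bar>) ^ 5)"
  have s5: "5 \<le> s" by (rule mdata_s[OF md])
  have D: "D \<noteq> 0" and cl: "\<And>k. k < 5 \<Longrightarrow> cl k < s" and rho: "\<And>i. i < n \<Longrightarrow> \<rho> i < s"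
    and W: "\<And>k k'. k < 5 \<Longrightarrow> k' < 5 \<Longrightarrow> (\<Sum>i<n. w k i * M $$ (\<rho> i, cl k')) = (if k = k' then D else 0)"
    using md unfolding mdata_def by auto
  have cnt: "card {h\<in>box s P. \<forall>i<s. int P dvd (2 * m) * Mv s M h i} \<le> (10 * nat \<bar>2 * m * D\<bar>) ^ 5 * P ^ (s - 5)"
    by (rule count_main[OF P _ D cl rho W]) (use m in auto)
  have "(cmod (\<Sum>x\<in>cset s P m r. ee P (b * qform s M x)))^2
     \<le> real (card (cset s P m r)) * real (card {h\<in>box s P. \<forall>i<s. int P dvd 2 * m * Mv s M h i})"
    by (rule weyl[OF P m(2) b symm])
  also have "\<dots> \<le> real (P ^ s) * real ((10 * nat \<bar>2 * m * D\<bar>) ^ 5 * P ^ (s - 5))"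
  proof -
    have a1: "real (card (cset s P m r)) \<le> real (P ^ s)" using card_cset_le[of s P m r] by (simp only: of_nat_le_iff)
    have a2: "real (card {h\<in>box s P. \<forall>i<s. int P dvd 2 * m * Mv s M h i}) \<le> real ((10 * nat \<bar>2 * m * D\<bar>) ^ 5 * P ^ (s - 5))"
      using cnt by (simp only: of_nat_le_iff)
    show ?thesis by (rule mult_mono[OF a1 a2]) simp_all
  qed
  also have "\<dots> = ?K * (real P ^ s * real P ^ (s - 5))" by (simp add: algebra_simps)
  also have "\<dots> \<le> ?K * (real P ^ (s - 2))^2"
  proof -
    have "real P ^ s * real P ^ (s - 5) = real P ^ (s + (s - 5))" by (simp add: power_add)
    also have "\<dots> \<le> real P ^ ((s - 2) * 2)" using P s5 by (intro power_increasing) auto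
    also have "\<dots> = (real P ^ (s - 2))^2" by (simp add: power_mult)
    finally show ?thesis by (intro mult_left_mono) auto
  qed
  also have "\<dots> = (sqrt ?K * real P ^ (s - 2))^2" by (simp add: power_mult_distrib)
  finally have "(cmod (\<Sum>x\<in>cset s P m r. ee P (b * qform s M x)))^2 \<le> (sqrt ?K * real P ^ (s - 2))^2" .
  then show ?thesis by (rule power2_le_imp_le) simp
qed

lemma coprime_P: assumes "coprime b (int p)" shows "coprime b (int (p ^ k))"
  using assms by (simp add: coprime_power_right_iff of_nat_power)

lemma U_bound_all:
  assumes md: "mdata s M D n \<rho> cl w" and p: "prime p" and b: "coprime b (int p)"
    and symm: "\<And>i j. i < s \<Longrightarrow> j < s \<Longrightarrow> M $$ (i, j) = M $$ (j, i)"
  shows "cmod (\<Sum>x\<in>{x\<in>box s (p ^ k). True}. ee (p ^ k) (b * qform s M x))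
     \<le> sqrt (real ((10 * nat \<bar>2 * 1 * D\<bar>) ^ 5)) * real (p ^ k) ^ (s - 2)"
proof -
  have P: "p ^ k > 0" using p by (simp add: prime_gt_0_nat)
  have e: "{x\<in>box s (p ^ k). True} = cset s (p ^ k) 1 (\<lambda>_. 0)" unfolding cset_def by (simp add: cong_def)
  show ?thesis unfolding e by (rule S_bound[OF md P _ _ coprime_P[OF b] symm]) simp_all
qed

lemma U_bound_star:
  assumes md: "mdata s M D n \<rho> cl w" and p: "prime p" and b: "coprime b (int p)" and k: "k \<ge> 1"
    and symm: "\<And>i j. i < s \<Longrightarrow> j < s \<Longrightarrow> M $$ (i, j) = M $$ (j, i)"
  shows "cmod (\<Sum>x\<in>{x\<in>box s (p ^ k). \<forall>j<s. coprime (x j) (int p)}. ee (p ^ k) (b * qform s M x))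
     \<le> real p ^ s * (sqrt (real ((10 * nat \<bar>2 * int p * D\<bar>) ^ 5)) * real (p ^ k) ^ (s - 2))"
proof -
  let ?P = "p ^ k"
  let ?C = "sqrt (real ((10 * nat \<bar>2 * int p * D\<bar>) ^ 5)) * real (p ^ k) ^ (s - 2)"
  let ?F = "\<lambda>x. ee ?P (b * qform s M x)"
  define Ru where "Ru = {r\<in>box s p. \<forall>j<s. coprime (r j) (int p)}"
  have p0: "p > 0" using p by (simp add: prime_gt_0_nat)
  have P: "?P > 0" using p0 by simp
  have pdvd: "int p dvd int ?P" using k by (simp add: dvd_power)
  have U: "{x\<in>box s ?P. \<forall>j<s. coprime (x j) (int p)} = (\<Union>r\<in>Ru. cset s ?P (int p) r)"
  proof
    show "{x\<in>box s ?P. \<forall>j<s. coprime (x j) (int p)} \<subseteq> (\<Union>r\<in>Ru. cset s ?P (int p) r)"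
    proof
      fix x assume x: "x \<in> {x\<in>box s ?P. \<forall>j<s. coprime (x j) (int p)}"
      define r where "r = restrict (\<lambda>j. x j mod int p) {..<s}"
      have "r \<in> box s p" unfolding r_def using p0 by (intro box_restrict) simp
      moreover have "coprime (r j) (int p)" if j: "j < s" for j
      proof -
        have "[x j = r j] (mod int p)" unfolding r_def using j by (simp add: cong_def)
        then show ?thesis using x j cong_imp_coprime by blast
      qed
      ultimately have "r \<in> Ru" unfolding Ru_def by simp
      moreover have "x \<in> cset s ?P (int p) r" using x unfolding cset_def r_def by (simp add: cong_def)
      ultimately show "x \<in> (\<Union>r\<in>Ru. cset s ?P (int p) r)" by blast
    qed
    show "(\<Union>r\<in>Ru. cset s ?P (int p) r) \<subseteq> {x\<in>box s ?P. \<forall>j<s. coprime (x j) (int p)}"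
    proof
      fix x assume "x \<in> (\<Union>r\<in>Ru. cset s ?P (int p) r)"
      then obtain r where r: "r \<in> Ru" and x: "x \<in> cset s ?P (int p) r" by blast
      have "coprime (x j) (int p)" if j: "j < s" for j
      proof -
        have "[r j = x j] (mod int p)" using x j unfolding cset_def by (simp add: cong_sym)
        moreover have "coprime (r j) (int p)" using r j unfolding Ru_def by simp
        ultimately show ?thesis using cong_imp_coprime by blast
      qed
      then show "x \<in> {x\<in>box s ?P. \<forall>j<s. coprime (x j) (int p)}" using x unfolding cset_def by simp
    qed
  qed
  have finRu: "finite Ru" unfolding Ru_def by simp
  have disj: "\<forall>r\<in>Ru. \<forall>r'\<in>Ru. r \<noteq> r' \<longrightarrow> cset s ?P (int p) r \<inter> cset s ?P (int p) r' = {}"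
  proof (intro ballI impI)
    fix r r' assume r: "r \<in> Ru" and r': "r' \<in> Ru" and ne: "r \<noteq> r'"
    show "cset s ?P (int p) r \<inter> cset s ?P (int p) r' = {}"
    proof (rule ccontr)
      assume "cset s ?P (int p) r \<inter> cset s ?P (int p) r' \<noteq> {}"
      then obtain x where x: "x \<in> cset s ?P (int p) r" "x \<in> cset s ?P (int p) r'" by blast
      have rb: "r \<in> box s p" and rb': "r' \<in> box s p" using r r' unfolding Ru_def by auto
      have "r = r'"
      proof (rule box_eqI[OF rb rb'])
        fix j assume j: "j < s"
        have c1: "[x j = r j] (mod int p)" and c2: "[x j = r' j] (mod int p)" using x j unfolding cset_def by auto
        have "[r j = r' j] (mod int p)" using cong_trans[OF cong_sym[OF c1] c2] .
        then have "r j mod int p = r' j mod int p" by (simp add: cong_def)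
        then show "r j = r' j" using box_memD[OF rb j] box_memD[OF rb' j] by simp
      qed
      then show False using ne by simp
    qed
  qed
  have "(\<Sum>x\<in>{x\<in>box s ?P. \<forall>j<s. coprime (x j) (int p)}. ?F x) = (\<Sum>r\<in>Ru. \<Sum>x\<in>cset s ?P (int p) r. ?F x)"
    unfolding U by (rule sum.UNION_disjoint[OF finRu _ disj]) simp
  then have "cmod (\<Sum>x\<in>{x\<in>box s ?P. \<forall>j<s. coprime (x j) (int p)}. ?F x) \<le> (\<Sum>r\<in>Ru. cmod (\<Sum>x\<in>cset s ?P (int p) r. ?F x))"
    by (simp add: norm_sum)
  also have "\<dots> \<le> (\<Sum>r\<in>Ru. ?C)"
    by (intro sum_mono S_bound[OF md P _ pdvd coprime_P[OF b] symm]) (use p0 in simp)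
  also have "\<dots> = real (card Ru) * ?C" by simp
  also have "\<dots> \<le> real p ^ s * ?C"
  proof -
    have "card Ru \<le> card (box s p)" unfolding Ru_def by (rule card_mono) auto
    then have "real (card Ru) \<le> real p ^ s" by (simp add: card_box flip: of_nat_power)
    then show ?thesis by (rule mult_right_mono) simp
  qed
  finally show ?thesis .
qed

lemma conv_seq:
  fixes N :: "nat \<Rightarrow> nat" and C :: real
  assumes p: "p \<ge> 2" and s: "s \<ge> 1"
    and rec: "\<And>n. n \<ge> 1 \<Longrightarrow> \<bar>real (N (Suc n)) * real p ^ Suc n - real p ^ s * real (N n) * real p ^ n\<bar>
       \<le> C * real p ^ (Suc n * (s - 1))"
  shows "convergent (\<lambda>n. real (N n) / real p ^ (n * (s - 1)))"
proof -
  define u where "u = (\<lambda>n. real (N n) / real p ^ (n * (s - 1)))"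
  define d where "d = (\<lambda>n. u (Suc n) - u n)"
  obtain t where t: "s = Suc t" using s by (cases s) auto
  let ?a = "real p"
  have a0: "?a > 0" using p by simp
  have dn: "\<bar>d n\<bar> \<le> C * (1 / ?a) ^ Suc n" if n: "n \<ge> 1" for n
  proof -
    have x1: "Suc n * s = Suc n * t + Suc n" using t by simp
    have e1: "?a ^ (Suc n * s) = ?a ^ (Suc n * t) * ?a ^ Suc n"
      by (simp only: x1 power_add)
    have x2: "Suc n * s = s + n + n * t" using t by simp
    have e2: "?a ^ s * ?a ^ n * ?a ^ (n * t) = ?a ^ (Suc n * s)"
      by (simp only: x2 power_add)
    have "d n = (real (N (Suc n)) * ?a ^ Suc n - ?a ^ s * real (N n) * ?a ^ n) / ?a ^ (Suc n * s)"
    proof -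
      have "real (N (Suc n)) * ?a ^ Suc n / ?a ^ (Suc n * s) = real (N (Suc n)) / ?a ^ (Suc n * t)"
        unfolding e1 using a0 by simp
      moreover have "?a ^ s * real (N n) * ?a ^ n / ?a ^ (Suc n * s) = real (N n) / ?a ^ (n * t)"
        unfolding e2[symmetric] using a0 by (simp add: field_simps)
      ultimately show ?thesis unfolding d_def u_def t by (simp add: diff_divide_distrib)
    qed
    then have "\<bar>d n\<bar> = \<bar>real (N (Suc n)) * ?a ^ Suc n - ?a ^ s * real (N n) * ?a ^ n\<bar> / ?a ^ (Suc n * s)"
      using a0 by simp
    also have "\<dots> \<le> C * ?a ^ (Suc n * t) / ?a ^ (Suc n * s)"
      using rec[OF n] a0 unfolding t by (intro divide_right_mono) auto
    also have "\<dots> = C * (1 / ?a) ^ Suc n" unfolding e1 using a0 by (simp add: field_simps power_one_over)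
    finally show ?thesis .
  qed
  have "summable (\<lambda>n. C * (1 / ?a) * (1 / ?a) ^ n)"
    using p by (intro summable_mult summable_geometric) simp
  then have "summable (\<lambda>n. C * (1 / ?a) ^ Suc n)" by (simp only: power_Suc mult.assoc)
  then have "summable d"
    by (rule summable_comparison_test'[where N = 1]) (use dn in auto)
  then have "(\<lambda>n. \<Sum>k<n. d k) \<longlonglongrightarrow> suminf d" by (rule summable_LIMSEQ)
  then have "(\<lambda>n. u 0 + (\<Sum>k<n. d k)) \<longlonglongrightarrow> u 0 + suminf d" by (intro tendsto_add) auto
  moreover have ueq: "(\<lambda>n. u 0 + (\<Sum>k<n. d k)) = u"
  proof (rule ext)
    fix n
    have "(\<Sum>k<n. d k) = u n - u 0" unfolding d_def by (rule sum_lessThan_telescope)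
    then show "u 0 + (\<Sum>k<n. d k) = u n" by simp
  qed
  ultimately have "u \<longlonglongrightarrow> u 0 + suminf d" by (simp only: ueq)
  then show ?thesis unfolding u_def convergent_def by blast
qed

lemma qform_transl:
  assumes symm: "\<And>i j. i < s \<Longrightarrow> j < s \<Longrightarrow> M $$ (i, j) = M $$ (j, i)"
    and ti: "translation_invariant s M"
  shows "qform s M (\<lambda>j. 1 + c * y j) = c ^ 2 * qform s M y"
proof -
  have cs: "(\<Sum>i<s. M $$ (i, j)) = 0" if "j < s" for j using ti that unfolding translation_invariant_def by simp
  have q1: "qform s M (\<lambda>_. 1) = 0"
  proof -
    have "qform s M (\<lambda>_. 1) = (\<Sum>i<s. \<Sum>j<s. M $$ (i, j))" unfolding qform_def by simp
    also have "\<dots> = (\<Sum>j<s. \<Sum>i<s. M $$ (i, j))" by (rule sum.swap)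
    also have "\<dots> = 0" using cs by simp
    finally show ?thesis .
  qed
  have m1: "(\<Sum>i<s. 1 * Mv s M (\<lambda>j. c * y j) i) = 0"
  proof -
    have "(\<Sum>i<s. 1 * Mv s M (\<lambda>j. c * y j) i) = (\<Sum>i<s. \<Sum>j<s. M $$ (i, j) * (c * y j))"
      unfolding Mv_def by simp
    also have "\<dots> = (\<Sum>j<s. \<Sum>i<s. M $$ (i, j) * (c * y j))" by (rule sum.swap)
    also have "\<dots> = (\<Sum>j<s. (\<Sum>i<s. M $$ (i, j)) * (c * y j))" by (simp add: sum_distrib_right)
    also have "\<dots> = 0" using cs by simp
    finally show ?thesis .
  qed
  have q2: "qform s M (\<lambda>j. c * y j) = c ^ 2 * qform s M y"
    unfolding qform_def by (simp add: sum_distrib_left power2_eq_square algebra_simps)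
  have "qform s M (\<lambda>j. 1 + c * y j) = qform s M (\<lambda>_. 1) + 2 * (\<Sum>i<s. 1 * Mv s M (\<lambda>j. c * y j) i) + qform s M (\<lambda>j. c * y j)"
    using qform_add[OF symm, where y = "\<lambda>_. 1" and h = "\<lambda>j. c * y j"] by simp
  then show ?thesis using q1 m1 q2 by simp
qed

lemma qform_restrict: "qform s M (restrict x {..<s}) = qform s M x"
  unfolding qform_def by (intro sum.cong) auto

lemma coprime_1_plus: "coprime (1 + int p * y) (int p)"
proof -
  have "gcd (int p) (y * int p + 1) = gcd (int p) 1" by (rule gcd_add_mult)
  then have "coprime (int p) (y * int p + 1)" by (simp add: coprime_iff_gcd_eq_1)
  then show ?thesis by (simp add: coprime_commute mult.commute add.commute)
qed

lemma count_sol_eq: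
  assumes p: "p > 0"
  shows "count_sol s M p k = card {x\<in>box s (p ^ k). True \<and> int (p ^ k) dvd qform s M x}"
proof -
  have inv: "inv_mod s (p ^ k) (\<lambda>x. True \<and> int (p ^ k) dvd qform s M x)"
    unfolding inv_mod_def
  proof (intro allI impI)
    fix x y :: "nat \<Rightarrow> int" assume "\<forall>j<s. [x j = y j] (mod int (p ^ k))"
    then have "[qform s M x = qform s M y] (mod int (p ^ k))" by (intro qform_cong) auto
    then show "(True \<and> int (p ^ k) dvd qform s M x) = (True \<and> int (p ^ k) dvd qform s M y)"
      using cong_dvd_iff by blast
  qed
  have "count_sol s M p k = card {x \<in> {..<s} \<rightarrow>\<^sub>E {1..int (p ^ k)}. True \<and> int (p ^ k) dvd qform s M x}"
    unfolding count_sol_def by (simp add: cong_0_iff)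
  also have "\<dots> = card {x\<in>box s (p ^ k). True \<and> int (p ^ k) dvd qform s M x}"
    by (rule transfer_box[OF _ inv]) (use p in simp)
  finally show ?thesis .
qed

lemma inv_star:
  assumes k: "k \<ge> 1"
  shows "inv_mod s (p ^ k) (\<lambda>x. \<forall>j<s. coprime (x j) (int p))"
  unfolding inv_mod_def
proof (intro allI impI)
  fix x y :: "nat \<Rightarrow> int" assume h: "\<forall>j<s. [x j = y j] (mod int (p ^ k))"
  have "int p dvd int (p ^ k)" using k by (simp add: dvd_power)
  then have h': "\<forall>j<s. [x j = y j] (mod int p)" using h cong_dvd_modulus by blast
  show "(\<forall>j<s. coprime (x j) (int p)) = (\<forall>j<s. coprime (y j) (int p))"
    using h' cong_imp_coprime cong_sym by blast
qed

lemma count_sol_star_eq: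
  assumes p: "p > 0" and k: "k \<ge> 1"
  shows "count_sol_star s M p k = card {x\<in>box s (p ^ k). (\<forall>j<s. coprime (x j) (int p)) \<and> int (p ^ k) dvd qform s M x}"
proof -
  have inv: "inv_mod s (p ^ k) (\<lambda>x. (\<forall>j<s. coprime (x j) (int p)) \<and> int (p ^ k) dvd qform s M x)"
    unfolding inv_mod_def
  proof (intro allI impI)
    fix x y :: "nat \<Rightarrow> int" assume h: "\<forall>j<s. [x j = y j] (mod int (p ^ k))"
    then have "[qform s M x = qform s M y] (mod int (p ^ k))" by (intro qform_cong) auto
    then have "(int (p ^ k) dvd qform s M x) = (int (p ^ k) dvd qform s M y)" using cong_dvd_iff by blast
    moreover have "(\<forall>j<s. coprime (x j) (int p)) = (\<forall>j<s. coprime (y j) (int p))"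
      using inv_star[OF k, of s p] h unfolding inv_mod_def by blast
    ultimately show "((\<forall>j<s. coprime (x j) (int p)) \<and> int (p ^ k) dvd qform s M x) =
        ((\<forall>j<s. coprime (y j) (int p)) \<and> int (p ^ k) dvd qform s M y)" by simp
  qed
  have "count_sol_star s M p k = card {x \<in> {..<s} \<rightarrow>\<^sub>E {1..int (p ^ k)}.
      (\<forall>j<s. coprime (x j) (int p)) \<and> int (p ^ k) dvd qform s M x}"
    unfolding count_sol_star_def by (simp add: cong_0_iff)
  also have "\<dots> = card {x\<in>box s (p ^ k). (\<forall>j<s. coprime (x j) (int p)) \<and> int (p ^ k) dvd qform s M x}"
    by (rule transfer_box[OF _ inv]) (use p in simp)
  finally show ?thesis .
qed

lemma pow_combine:
  assumes s: "s \<ge> 2"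
  shows "real (p ^ Suc k) * (C * real (p ^ Suc k) ^ (s - 2)) = C * real p ^ (Suc k * (s - 1))"
proof -
  have "real (p ^ Suc k) * (C * real (p ^ Suc k) ^ (s - 2)) = C * real (p ^ Suc k) ^ Suc (s - 2)"
    by (simp add: algebra_simps)
  also have "Suc (s - 2) = s - 1" using s by simp
  also have "real (p ^ Suc k) ^ (s - 1) = real p ^ (Suc k * (s - 1))"
    by (simp only: of_nat_power power_mult)
  finally show ?thesis .
qed

theorem lemma2p6:
  fixes s :: nat and M :: "int mat" and p :: nat
  assumes "M \<in> carrier_mat s s"
    and "transpose_mat M = M"
    and "translation_invariant s M"
    and "rank_off s M \<ge> 5"
    and "prime p"
  shows "sigma_p_star s M p \<ge> real p ^ 2 / real (totient p) ^ s * sigma_p s M p"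
proof -
  have Mc: "M \<in> carrier_mat s s" and pr: "prime p" using assms by auto
  have symm: "M $$ (i, j) = M $$ (j, i)" if "i < s" "j < s" for i j
  proof -
    have "M $$ (i, j) = transpose_mat M $$ (i, j)" using assms(2) by simp
    also have "\<dots> = M $$ (j, i)" using that Mc by simp
    finally show ?thesis .
  qed
  obtain D n \<rho> cl w where md: "mdata s M D n \<rho> cl w"
    using minor_data[OF Mc assms(4)] unfolding mdata_def by blast
  have s5: "5 \<le> s" by (rule mdata_s[OF md])
  have p2: "p \<ge> 2" using pr by (simp add: prime_ge_2_nat)
  have p0: "p > 0" using p2 by simp
  let ?f = "qform s M"
  define N where "N = (\<lambda>k. card {x\<in>box s (p ^ k). True \<and> int (p ^ k) dvd ?f x})"
  define Ns where "Ns = (\<lambda>k. card {x\<in>box s (p ^ k). (\<forall>j<s. coprime (x j) (int p)) \<and> int (p ^ k) dvd ?f x})"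
  have cs: "count_sol s M p k = N k" for k unfolding N_def by (rule count_sol_eq[OF p0])
  have css: "count_sol_star s M p k = Ns k" if "k \<ge> 1" for k unfolding Ns_def by (rule count_sol_star_eq[OF p0 that])
  define C1 where "C1 = sqrt (real ((10 * nat \<bar>2 * 1 * D\<bar>) ^ 5))"
  define C2 where "C2 = real p ^ s * sqrt (real ((10 * nat \<bar>2 * int p * D\<bar>) ^ 5))"
  have recN: "\<bar>real (N (Suc k)) * real p ^ Suc k - real p ^ s * real (N k) * real p ^ k\<bar>
      \<le> C1 * real p ^ (Suc k * (s - 1))" for k
  proof -
    have inv: "inv_mod s (p ^ k) (\<lambda>_. True)" unfolding inv_mod_def by simp
    have "\<bar>real (card {x\<in>box s (p ^ Suc k). True \<and> int (p ^ Suc k) dvd ?f x}) * real (p ^ Suc k)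
      - real p ^ s * real (card {x\<in>box s (p ^ k). True \<and> int (p ^ k) dvd ?f x}) * real (p ^ k)\<bar>
      \<le> real (p ^ Suc k) * (C1 * real (p ^ Suc k) ^ (s - 2))"
      by (rule recursion[OF pr _ _ inv]) (use p0 U_bound_all[OF md pr _ symm, of _ "Suc k"] in \<open>simp_all add: C1_def\<close>)
    also have "\<dots> = C1 * real p ^ (Suc k * (s - 1))" by (rule pow_combine) (use s5 in simp)
    finally have X: "\<bar>real (card {x\<in>box s (p ^ Suc k). True \<and> int (p ^ Suc k) dvd ?f x}) * real (p ^ Suc k)
      - real p ^ s * real (card {x\<in>box s (p ^ k). True \<and> int (p ^ k) dvd ?f x}) * real (p ^ k)\<bar>
      \<le> C1 * real p ^ (Suc k * (s - 1))" .
    then show ?thesis unfolding N_def by (simp only: of_nat_power)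
  qed
  have recNs: "\<bar>real (Ns (Suc k)) * real p ^ Suc k - real p ^ s * real (Ns k) * real p ^ k\<bar>
      \<le> C2 * real p ^ (Suc k * (s - 1))" if k: "k \<ge> 1" for k
  proof -
    have "\<bar>real (card {x\<in>box s (p ^ Suc k). (\<forall>j<s. coprime (x j) (int p)) \<and> int (p ^ Suc k) dvd ?f x}) * real (p ^ Suc k)
      - real p ^ s * real (card {x\<in>box s (p ^ k). (\<forall>j<s. coprime (x j) (int p)) \<and> int (p ^ k) dvd ?f x}) * real (p ^ k)\<bar>
      \<le> real (p ^ Suc k) * (C2 * real (p ^ Suc k) ^ (s - 2))"
      by (rule recursion[OF pr _ _ inv_star[OF k]])
        (use p0 U_bound_star[OF md pr _ _ symm, of _ "Suc k"] in \<open>simp_all add: C2_def mult.assoc\<close>)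
    also have "\<dots> = C2 * real p ^ (Suc k * (s - 1))" by (rule pow_combine) (use s5 in simp)
    finally have X: "\<bar>real (card {x\<in>box s (p ^ Suc k). (\<forall>j<s. coprime (x j) (int p)) \<and> int (p ^ Suc k) dvd ?f x}) * real (p ^ Suc k)
      - real p ^ s * real (card {x\<in>box s (p ^ k). (\<forall>j<s. coprime (x j) (int p)) \<and> int (p ^ k) dvd ?f x}) * real (p ^ k)\<bar>
      \<le> C2 * real p ^ (Suc k * (s - 1))" .
    then show ?thesis unfolding Ns_def by (simp only: of_nat_power)
  qed
  define u where "u = (\<lambda>k. real (N k) / real p ^ (k * (s - 1)))"
  define us where "us = (\<lambda>k. real (Ns k) / real p ^ (k * (s - 1)))"
  have "convergent u" unfolding u_def by (rule conv_seq[OF p2 _ recN]) (use s5 in simp)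
  then obtain L where L: "u \<longlonglongrightarrow> L" unfolding convergent_def by blast
  have "convergent us" unfolding us_def by (rule conv_seq[OF p2 _ recNs]) (use s5 in simp_all)
  then obtain Ls where Ls: "us \<longlonglongrightarrow> Ls" unfolding convergent_def by blast
  have sig: "sigma_p s M p = L"
  proof -
    have "(\<lambda>k. real (count_sol s M p k) / real p ^ (k * (s - 1))) = u" unfolding u_def cs ..
    then show ?thesis unfolding sigma_p_def using L by (simp add: limI)
  qed
  define \<phi> where "\<phi> = real (totient p)"
  have phi: "\<phi> = real p - 1" unfolding \<phi>_def using pr p2 by (simp add: totient_prime of_nat_diff)
  have phi0: "\<phi> > 0" using phi p2 by simp
  have aeq: "real p ^ k / real (totient (p ^ k)) ^ s * real (count_sol_star s M p k) = (real p / \<phi>) ^ s * us k"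
    if k: "k \<ge> 1" for k
  proof -
    obtain j where j: "k = Suc j" using k by (cases k) auto
    obtain t where t: "s = Suc t" using s5 by (cases s) auto
    have tot: "real (totient (p ^ k)) = real p ^ j * \<phi>"
    proof -
      have "totient (p ^ Suc j) = p ^ j * (p - 1)" by (rule totient_prime_power_Suc[OF pr])
      then have "totient (p ^ Suc j) = p ^ j * totient p" using pr by (simp add: totient_prime)
      then show ?thesis unfolding j \<phi>_def by (simp only: of_nat_mult of_nat_power)
    qed
    have "real p ^ k / real (totient (p ^ k)) ^ s * real (count_sol_star s M p k)
        = real p ^ Suc j * real (Ns k) / ((real p ^ j) ^ s * \<phi> ^ s)"
      unfolding css[OF k] tot by (simp add: power_mult_distrib j)
    also have "\<dots> = (real p / \<phi>) ^ s * us k"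
    proof -
      let ?a = "real p"
      let ?X = "real (Ns k)"
      have a0: "?a > 0" using p0 by simp
      have ex: "Suc j + Suc j * t = s + j * s" using t by simp
      have e: "?a ^ Suc j * ?a ^ (Suc j * t) = ?a ^ s * (?a ^ j) ^ s"
      proof -
        have "?a ^ Suc j * ?a ^ (Suc j * t) = ?a ^ (Suc j + Suc j * t)" by (simp only: power_add)
        also have "\<dots> = ?a ^ (s + j * s)" by (simp only: ex)
        also have "\<dots> = ?a ^ s * (?a ^ j) ^ s" by (simp only: power_add power_mult)
        finally show ?thesis .
      qed
      have uk: "us k = ?X / ?a ^ (Suc j * t)" unfolding us_def j t by simp
      have "(?a / \<phi>) ^ s * us k = ?a ^ s * ?X / (\<phi> ^ s * ?a ^ (Suc j * t))"
        unfolding uk power_divide by simp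
      also have "\<dots> = ?a ^ Suc j * ?X / ((?a ^ j) ^ s * \<phi> ^ s)"
      proof -
        have nz1: "\<phi> ^ s * ?a ^ (Suc j * t) \<noteq> 0" using a0 phi0 by simp
        have nz2: "(?a ^ j) ^ s * \<phi> ^ s \<noteq> 0" using a0 phi0 by simp
        have "?a ^ s * ?X * ((?a ^ j) ^ s * \<phi> ^ s) = ?X * \<phi> ^ s * (?a ^ s * (?a ^ j) ^ s)"
          by (simp only: ac_simps)
        also have "\<dots> = ?X * \<phi> ^ s * (?a ^ Suc j * ?a ^ (Suc j * t))" by (simp only: e)
        also have "\<dots> = ?a ^ Suc j * ?X * (\<phi> ^ s * ?a ^ (Suc j * t))" by (simp only: ac_simps)
        finally show ?thesis using nz1 nz2 by (simp add: frac_eq_eq)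
      qed
      finally show ?thesis by simp
    qed
    finally show ?thesis .
  qed
  have A: "(\<lambda>k. real p ^ k / real (totient (p ^ k)) ^ s * real (count_sol_star s M p k)) \<longlonglongrightarrow> (real p / \<phi>) ^ s * Ls"
  proof -
    have "(\<lambda>k. (real p / \<phi>) ^ s * us k) \<longlonglongrightarrow> (real p / \<phi>) ^ s * Ls" by (intro tendsto_mult Ls tendsto_const)
    moreover have "\<forall>\<^sub>F k in sequentially. (real p / \<phi>) ^ s * us k = real p ^ k / real (totient (p ^ k)) ^ s * real (count_sol_star s M p k)"
      unfolding eventually_sequentially using aeq by (intro exI[of _ 1]) (simp add: eq_commute)
    ultimately show ?thesis by (rule Lim_transform_eventually)
  qed
  have sigs: "sigma_p_star s M p = (real p / \<phi>) ^ s * Ls"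
    unfolding sigma_p_star_def using A by (rule limI)
  define c where "c = real p ^ s / real p ^ (2 * (s - 1))"
  have key: "Ns (k + 2) \<ge> p ^ s * N k" for k
  proof -
    define A where "A = {y\<in>box s (p * p ^ k). True \<and> int (p ^ k) dvd ?f y}"
    have inv: "inv_mod s (p ^ k) (\<lambda>y. True \<and> int (p ^ k) dvd ?f y)"
      unfolding inv_mod_def
    proof (intro allI impI)
      fix x y :: "nat \<Rightarrow> int" assume "\<forall>j<s. [x j = y j] (mod int (p ^ k))"
      then have "[?f x = ?f y] (mod int (p ^ k))" by (intro qform_cong) auto
      then show "(True \<and> int (p ^ k) dvd ?f x) = (True \<and> int (p ^ k) dvd ?f y)"
        using cong_dvd_iff by blast
    qed
    have cA: "card A = p ^ s * N k" unfolding A_def N_def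
      by (rule fiber_card[OF _ p0 inv]) (use p0 in simp)
    define \<iota> where "\<iota> = (\<lambda>y :: nat \<Rightarrow> int. restrict (\<lambda>j. 1 + int p * y j) {..<s})"
    define B where "B = {x\<in>box s (p ^ (k + 2)). (\<forall>j<s. coprime (x j) (int p)) \<and> int (p ^ (k + 2)) dvd ?f x}"
    have inj: "inj_on \<iota> A"
    proof
      fix y y' assume y: "y \<in> A" and y': "y' \<in> A" and e: "\<iota> y = \<iota> y'"
      have yb: "y \<in> box s (p * p ^ k)" and yb': "y' \<in> box s (p * p ^ k)" using y y' unfolding A_def by auto
      show "y = y'"
      proof (rule box_eqI[OF yb yb'])
        fix j assume j: "j < s"
        have "\<iota> y j = \<iota> y' j" using e by simp
        then have "1 + int p * y j = 1 + int p * y' j" using j unfolding \<iota>_def by simp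
        then show "y j = y' j" using p0 by simp
      qed
    qed
    have img: "\<iota> ` A \<subseteq> B"
    proof
      fix z assume "z \<in> \<iota> ` A"
      then obtain y where y: "y \<in> A" and z: "z = \<iota> y" by blast
      have yb: "y \<in> box s (p * p ^ k)" and yd: "int (p ^ k) dvd ?f y" using y unfolding A_def by auto
      have "z \<in> box s (p ^ (k + 2))" unfolding z \<iota>_def
      proof (rule box_restrict)
        fix j assume j: "j < s"
        have b: "0 \<le> y j" "y j + 1 \<le> int (p * p ^ k)" using box_memD[OF yb j] by auto
        have "int p * (y j + 1) \<le> int p * int (p * p ^ k)" using b(2) by (intro mult_left_mono) auto
        moreover have "int p * int (p * p ^ k) = int (p ^ (k + 2))" by (simp add: power_add algebra_simps)
        ultimately have "1 + int p * y j < int (p ^ (k + 2))" using p2 by (simp add: algebra_simps)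
        moreover have "0 \<le> 1 + int p * y j" using b(1) by simp
        ultimately show "0 \<le> 1 + int p * y j \<and> 1 + int p * y j < int (p ^ (k + 2))" by simp
      qed
      moreover have "\<forall>j<s. coprime (z j) (int p)" unfolding z \<iota>_def by (simp add: coprime_1_plus)
      moreover have "int (p ^ (k + 2)) dvd ?f z"
      proof -
        have "?f z = ?f (\<lambda>j. 1 + int p * y j)" unfolding z \<iota>_def by (rule qform_restrict)
        also have "\<dots> = int p ^ 2 * ?f y" by (rule qform_transl[OF symm assms(3)])
        finally have fz: "?f z = int p ^ 2 * ?f y" .
        have d: "int p ^ 2 * int (p ^ k) dvd int p ^ 2 * ?f y" using yd by (rule mult_dvd_mono[OF dvd_refl])
        have eqp: "int (p ^ (k + 2)) = int p ^ 2 * int (p ^ k)"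
          by (simp only: power_add of_nat_mult of_nat_power mult.commute)
        show ?thesis unfolding fz eqp by (rule d)
      qed
      ultimately show "z \<in> B" unfolding B_def by simp
    qed
    have "card A \<le> card B" by (rule card_inj_on_le[OF inj img]) (simp add: B_def)
    then show ?thesis unfolding cA B_def Ns_def by simp
  qed
  have ineq: "c * u k \<le> us (k + 2)" for k
  proof -
    have x: "(k + 2) * (s - 1) = 2 * (s - 1) + k * (s - 1)" by (simp only: add_mult_distrib add.commute)
    have e: "real p ^ ((k + 2) * (s - 1)) = real p ^ (2 * (s - 1)) * real p ^ (k * (s - 1))"
      by (simp only: x power_add)
    have "c * u k = real (p ^ s * N k) / real p ^ ((k + 2) * (s - 1))"
      unfolding c_def u_def e by (simp add: of_nat_power)
    also have "\<dots> \<le> real (Ns (k + 2)) / real p ^ ((k + 2) * (s - 1))"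
    proof (rule divide_right_mono)
      show "real (p ^ s * N k) \<le> real (Ns (k + 2))" using key[of k] by (simp only: of_nat_le_iff)
    qed simp
    finally show ?thesis unfolding us_def .
  qed
  have "c * L \<le> Ls"
  proof (rule LIMSEQ_le)
    show "(\<lambda>k. c * u k) \<longlonglongrightarrow> c * L" by (intro tendsto_mult L tendsto_const)
    show "(\<lambda>k. us (k + 2)) \<longlonglongrightarrow> Ls" using LIMSEQ_ignore_initial_segment[OF Ls, of 2] .
    show "\<exists>N. \<forall>n\<ge>N. c * u n \<le> us (n + 2)" using ineq by blast
  qed
  then have "(real p / \<phi>) ^ s * (c * L) \<le> (real p / \<phi>) ^ s * Ls"
    using phi0 by (intro mult_left_mono) auto
  moreover have "(real p / \<phi>) ^ s * (c * L) = real p ^ 2 / \<phi> ^ s * L"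
  proof -
    let ?a = "real p"
    have a0: "?a > 0" using p0 by simp
    have ex: "s + s = 2 + 2 * (s - 1)" using s5 by simp
    have e: "?a ^ s * ?a ^ s = ?a ^ 2 * ?a ^ (2 * (s - 1))"
      by (simp only: power_add[symmetric] ex)
    have "(?a / \<phi>) ^ s * (c * L) = (?a ^ s * ?a ^ s) / (\<phi> ^ s * ?a ^ (2 * (s - 1))) * L"
      unfolding c_def power_divide by simp
    also have "\<dots> = (?a ^ 2 * ?a ^ (2 * (s - 1))) / (\<phi> ^ s * ?a ^ (2 * (s - 1))) * L" by (simp only: e)
    also have "\<dots> = ?a ^ 2 / \<phi> ^ s * L" using a0 by simp
    finally show ?thesis .
  qed
  ultimately show ?thesis unfolding sig sigs \<phi>_def by simp
qed

end
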